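(* Fix a $C^0$-concept over $\mathbb{K}$. Let $E,F\in\mathcal{M}$, $U\subseteq E$ open, $k\ge2$, $f\colon U\to F$ of class $C^k$, and let $f(x+th)=\sum_{j=0}^kt^ja_j(x,h)+t^kR_{k+1}(x,h,t)$ ($(x,h,t)\in U^{[1]}$) be the unique expansion with $a_j\colon U\times E\to F$ of class $C^{k-j}$ and $R_{k+1}\colon U^{[1]}\to F$ of class $C^0$ with $R_{k+1}(x,h,0)=0$. Then $a_0(x,h)=f(x)$ is constant in $h$, $a_1(x,h)=df(x)h$ is linear in $h$, and $a_2(x,\cdot)$ is an $F$-valued quadratic form with $$a_2(x,h_1+h_2)-a_2(x,h_1)-a_2(x,h_2)=d^2f(x)(h_1,h_2);$$ in particular $2a_2(x,h)=d^2f(x)(h,h)$.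
   Context: Let $\mathbb{K}$ be a commutative ring with unit carrying a topology. A $C^0$-concept over $\mathbb{K}$ consists of: (a) a class $\mathcal{M}$ of topologized $\mathbb{K}$-modules with $\mathbb{K}\in\mathcal{M}$; (b) for $E,F\in\mathcal{M}$ and open $U\subseteq E$, a set $C^0(U,F)$ of continuous maps; (c) for $E_1,E_2\in\mathcal{M}$ a topology on $E_1\times E_2$ (not necessarily the product topology) making it a member of $\mathcal{M}$; subject to: (I.1) composites of $C^0$-maps are $C^0$, identities and inclusions of open subsets are $C^0$; (I.2) $x\mapsto rx+b$ is $C^0$; (I.3) $t\mapsto tv+x$ is $C^0$; (I.4) $\mathbb{K}^\times$ is open and inversion is $C^0$; (I.5) $C^0$ is local on open covers; (II.1) projections and $v\mapsto(v,y)$, $w\mapsto(x,w)$ are $C^0$; (II.2) $f_1\times f_2$ is $C^0$ for $C^0$-maps $f_i$; (II.3) diagonals are $C^0$; (II.4) exchange/associativity maps of products are $C^0$ both ways; (II.5) addition and scalar multiplication are $C^0$; (III) a $C^0$-map on open $U\subseteq\mathbb{K}$ is determined by its values on $U\cap\mathbb{K}^\times$. For open $V\subseteq X$, $V^{[1]}=\{(x,v,t)\in V\times X\times\mathbb{K}:x+tv\in V\}$; a $C^0$-map $g$ is $C^1$ if there is a $C^0$-map $g^{[1]}$ on $V^{[1]}$ with $g(x+tv)-g(x)=t\,g^{[1]}(x,v,t)$, and $dg(x)v:=g^{[1]}(x,v,0)=:\partial_vg(x)$; recursively $g$ is $C^{k+1}$ if $C^k$ and $g^{[k]}$ is $C^1$,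 $g^{[k+1]}=(g^{[k]})^{[1]}$. For $f$ of class $C^2$, $d^2f(x)(v,w):=\partial_v\partial_wf(x)$. An $F$-valued quadratic form is a map $q\colon E\to F$ with $q(th)=t^2q(h)$ for all $t\in\mathbb{K}$ and $q(h_1+h_2)-q(h_1)-q(h_2)$ $\mathbb{K}$-bilinear in $(h_1,h_2)$. *)

theory Defs
  imports "HOL-Analysis.Analysis"
begin

datatype ('k, 'a) val = Sc (unSc: 'k) | At 'a | Pr (vfst: "('k, 'a) val") (vsnd: "('k, 'a) val")

record ('k, 'a) tmod =
  mcar   :: "('k, 'a) val set"
  mzero  :: "('k, 'a) val"
  madd   :: "('k, 'a) val \<Rightarrow> ('k, 'a) val \<Rightarrow> ('k, 'a) val"
  msmul  :: "'k \<Rightarrow> ('k, 'a) val \<Rightarrow> ('k, 'a) val"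
  mtop   :: "('k, 'a) val topology"

definition msub :: "('k::comm_ring_1, 'a) tmod \<Rightarrow> ('k, 'a) val \<Rightarrow> ('k, 'a) val \<Rightarrow> ('k, 'a) val" where
  "msub E x y = madd E x (msmul E (-1) y)"

definition is_tmod :: "('k::comm_ring_1, 'a) tmod \<Rightarrow> bool" where
  "is_tmod E \<longleftrightarrow>
     topspace (mtop E) = mcar E \<and>
     mzero E \<in> mcar E \<and>
     (\<forall>x\<in>mcar E. \<forall>y\<in>mcar E. madd E x y \<in> mcar E) \<and>
     (\<forall>r. \<forall>x\<in>mcar E. msmul E r x \<in> mcar E) \<and>
     (\<forall>x\<in>mcar E. \<forall>y\<in>mcar E. \<forall>z\<in>mcar E. madd E (madd E x y) z = madd E x (madd E y z)) \<and>
     (\<forall>x\<in>mcar E. \<forall>y\<in>mcar E. madd E x y = madd E y x) \<and>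
     (\<forall>x\<in>mcar E. madd E (mzero E) x = x) \<and>
     (\<forall>x\<in>mcar E. \<exists>y\<in>mcar E. madd E x y = mzero E) \<and>
     (\<forall>r. \<forall>x\<in>mcar E. \<forall>y\<in>mcar E. msmul E r (madd E x y) = madd E (msmul E r x) (msmul E r y)) \<and>
     (\<forall>r s. \<forall>x\<in>mcar E. msmul E (r + s) x = madd E (msmul E r x) (msmul E s x)) \<and>
     (\<forall>r s. \<forall>x\<in>mcar E. msmul E (r * s) x = msmul E r (msmul E s x)) \<and>
     (\<forall>x\<in>mcar E. msmul E 1 x = x)"

fun msumn :: "('k, 'a) tmod \<Rightarrow> nat \<Rightarrow> (nat \<Rightarrow> ('k, 'a) val) \<Rightarrow> ('k, 'a) val" where
  "msumn E 0 h = mzero E"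
| "msumn E (Suc n) h = madd E (msumn E n h) (h n)"

definition pset :: "('k, 'a) val set \<Rightarrow> ('k, 'a) val set \<Rightarrow> ('k, 'a) val set" where
  "pset A B = {Pr x y | x y. x \<in> A \<and> y \<in> B}"

text \<open>Data of a C^0-concept: the topology of K, the class M, the sets C^0(U,F)
  (as a predicate \<open>C0 E F U g\<close>: g \<in> C^0(U,F) for U open in E), and the
  topology chosen on products.\<close>
record ('k, 'a) c0concept =
  Ktop :: "'k topology"
  Mods :: "('k, 'a) tmod set"
  C0   :: "('k, 'a) tmod \<Rightarrow> ('k, 'a) tmod \<Rightarrow> ('k, 'a) val set \<Rightarrow> (('k, 'a) val \<Rightarrow> ('k, 'a) val) \<Rightarrow> bool"
  ptop :: "('k, 'a) tmod \<Rightarrow> ('k, 'a) tmod \<Rightarrow> ('k, 'a) val topology"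

definition Kmod :: "('k::comm_ring_1, 'a) c0concept \<Rightarrow> ('k, 'a) tmod" where
  "Kmod c = \<lparr> mcar = range Sc, mzero = Sc 0,
              madd = (\<lambda>x y. Sc (unSc x + unSc y)),
              msmul = (\<lambda>r x. Sc (r * unSc x)),
              mtop = pullback_topology (range Sc) unSc (Ktop c) \<rparr>"

definition prodm :: "('k, 'a) c0concept \<Rightarrow> ('k, 'a) tmod \<Rightarrow> ('k, 'a) tmod \<Rightarrow> ('k, 'a) tmod" where
  "prodm c E1 E2 = \<lparr> mcar = pset (mcar E1) (mcar E2),
                     mzero = Pr (mzero E1) (mzero E2),
                     madd = (\<lambda>p q. Pr (madd E1 (vfst p) (vfst q)) (madd E2 (vsnd p) (vsnd q))),
                     msmul = (\<lambda>r p. Pr (msmul E1 r (vfst p)) (msmul E2 r (vsnd p))),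
                     mtop = ptop c E1 E2 \<rparr>"

definition kunits :: "'k::comm_ring_1 set" where
  "kunits = {r. r dvd 1}"

definition kinv :: "'k::comm_ring_1 \<Rightarrow> 'k" where
  "kinv r = (SOME s. r * s = 1)"

definition is_C0_concept :: "('k::comm_ring_1, 'a) c0concept \<Rightarrow> bool" where
  "is_C0_concept c \<longleftrightarrow>
   (let M = Mods c; K = Kmod c; C = C0 c; P = prodm c in
     topspace (Ktop c) = UNIV \<and>
     \<comment> \<open>(a), (c)\<close>
     K \<in> M \<and> (\<forall>E\<in>M. is_tmod E) \<and> (\<forall>E1\<in>M. \<forall>E2\<in>M. P E1 E2 \<in> M) \<and>
     \<comment> \<open>(b): C^0-maps are continuous maps U \<rightarrow> F, U open in E; they are maps on U only\<close>
     (\<forall>E F U g. C E F U g \<longrightarrow> E \<in> M \<and> F \<in> M \<and> openin (mtop E) U \<and>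
                continuous_map (subtopology (mtop E) U) (mtop F) g) \<and>
     (\<forall>E F U g g'. C E F U g \<and> (\<forall>x\<in>U. g x = g' x) \<longrightarrow> C E F U g') \<and>
     \<comment> \<open>(I.1)\<close>
     (\<forall>E F G U V g h. C E F U g \<and> C F G V h \<and> g ` U \<subseteq> V \<longrightarrow> C E G U (h \<circ> g)) \<and>
     (\<forall>E\<in>M. \<forall>U. openin (mtop E) U \<longrightarrow> C E E U id) \<and>
     \<comment> \<open>(I.2)\<close>
     (\<forall>E\<in>M. \<forall>r. \<forall>b\<in>mcar E. C E E (mcar E) (\<lambda>x. madd E (msmul E r x) b)) \<and>
     \<comment> \<open>(I.3)\<close>
     (\<forall>E\<in>M. \<forall>v\<in>mcar E. \<forall>x\<in>mcar E. C K E (mcar K) (\<lambda>t. madd E (msmul E (unSc t) v) x)) \<and>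
     \<comment> \<open>(I.4)\<close>
     openin (mtop K) (Sc ` kunits) \<and> C K K (Sc ` kunits) (\<lambda>t. Sc (kinv (unSc t))) \<and>
     \<comment> \<open>(I.5)\<close>
     (\<forall>E\<in>M. \<forall>F\<in>M. \<forall>U \<V> g. (\<forall>V\<in>\<V>. openin (mtop E) V \<and> C E F V g) \<and> \<Union>\<V> = U
          \<longrightarrow> C E F U g) \<and>
     \<comment> \<open>(II.1)\<close>
     (\<forall>E1\<in>M. \<forall>E2\<in>M. C (P E1 E2) E1 (mcar (P E1 E2)) vfst \<and> C (P E1 E2) E2 (mcar (P E1 E2)) vsnd \<and>
          (\<forall>y\<in>mcar E2. C E1 (P E1 E2) (mcar E1) (\<lambda>v. Pr v y)) \<and>
          (\<forall>x\<in>mcar E1. C E2 (P E1 E2) (mcar E2) (\<lambda>w. Pr x w))) \<and>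
     \<comment> \<open>(II.2)\<close>
     (\<forall>E1 E2 F1 F2 U1 U2 f1 f2. C E1 F1 U1 f1 \<and> C E2 F2 U2 f2 \<longrightarrow>
          C (P E1 E2) (P F1 F2) (pset U1 U2) (\<lambda>p. Pr (f1 (vfst p)) (f2 (vsnd p)))) \<and>
     \<comment> \<open>(II.3)\<close>
     (\<forall>E\<in>M. C E (P E E) (mcar E) (\<lambda>x. Pr x x)) \<and>
     \<comment> \<open>(II.4)\<close>
     (\<forall>E1\<in>M. \<forall>E2\<in>M. \<forall>E3\<in>M.
          C (P E1 E2) (P E2 E1) (mcar (P E1 E2)) (\<lambda>p. Pr (vsnd p) (vfst p)) \<and>
          C (P (P E1 E2) E3) (P E1 (P E2 E3)) (mcar (P (P E1 E2) E3))
            (\<lambda>p. Pr (vfst (vfst p)) (Pr (vsnd (vfst p)) (vsnd p))) \<and>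
          C (P E1 (P E2 E3)) (P (P E1 E2) E3) (mcar (P E1 (P E2 E3)))
            (\<lambda>p. Pr (Pr (vfst p) (vfst (vsnd p))) (vsnd (vsnd p)))) \<and>
     \<comment> \<open>(II.5)\<close>
     (\<forall>E\<in>M. C (P E E) E (mcar (P E E)) (\<lambda>p. madd E (vfst p) (vsnd p)) \<and>
          C (P K E) E (mcar (P K E)) (\<lambda>p. msmul E (unSc (vfst p)) (vsnd p))) \<and>
     \<comment> \<open>(III)\<close>
     (\<forall>F U g h. C K F U g \<and> C K F U h \<and> (\<forall>t\<in>U \<inter> Sc ` kunits. g t = h t)
          \<longrightarrow> (\<forall>t\<in>U. g t = h t)))"

text \<open>\<open>V^{[1]} \<subseteq> X \<times> (X \<times> K)\<close>; the triple (x,v,t) is encoded as \<open>Pr x (Pr v t)\<close>.\<close>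
definition X3 :: "('k::comm_ring_1, 'a) c0concept \<Rightarrow> ('k, 'a) tmod \<Rightarrow> ('k, 'a) tmod" where
  "X3 c X = prodm c X (prodm c X (Kmod c))"

definition V1 :: "('k::comm_ring_1, 'a) c0concept \<Rightarrow> ('k, 'a) tmod \<Rightarrow> ('k, 'a) val set \<Rightarrow> ('k, 'a) val set" where
  "V1 c X V = {Pr x (Pr v t) | x v t. x \<in> V \<and> v \<in> mcar X \<and> t \<in> mcar (Kmod c) \<and>
                 madd X x (msmul X (unSc t) v) \<in> V}"

definition is_dq :: "('k::comm_ring_1, 'a) c0concept \<Rightarrow> ('k, 'a) tmod \<Rightarrow> ('k, 'a) tmod \<Rightarrow> ('k, 'a) val set
     \<Rightarrow> (('k, 'a) val \<Rightarrow> ('k, 'a) val) \<Rightarrow> (('k, 'a) val \<Rightarrow> ('k, 'a) val) \<Rightarrow> bool" where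
  "is_dq c X Y V g g1 \<longleftrightarrow> C0 c (X3 c X) Y (V1 c X V) g1 \<and>
     (\<forall>x v t. Pr x (Pr v t) \<in> V1 c X V \<longrightarrow>
        msub Y (g (madd X x (msmul X (unSc t) v))) (g x) = msmul Y (unSc t) (g1 (Pr x (Pr v t))))"

fun itsp :: "('k::comm_ring_1, 'a) c0concept \<Rightarrow> nat \<Rightarrow> ('k, 'a) tmod \<Rightarrow> ('k, 'a) tmod" where
  "itsp c 0 X = X"
| "itsp c (Suc j) X = X3 c (itsp c j X)"

fun itdom :: "('k::comm_ring_1, 'a) c0concept \<Rightarrow> nat \<Rightarrow> ('k, 'a) tmod \<Rightarrow> ('k, 'a) val set \<Rightarrow> ('k, 'a) val set" where
  "itdom c 0 X V = V"
| "itdom c (Suc j) X V = V1 c (itsp c j X) (itdom c j X V)"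

definition Ck :: "('k::comm_ring_1, 'a) c0concept \<Rightarrow> nat \<Rightarrow> ('k, 'a) tmod \<Rightarrow> ('k, 'a) tmod
     \<Rightarrow> ('k, 'a) val set \<Rightarrow> (('k, 'a) val \<Rightarrow> ('k, 'a) val) \<Rightarrow> bool" where
  "Ck c k X Y V g \<longleftrightarrow> (\<exists>G. G 0 = g \<and>
     (\<forall>j\<le>k. C0 c (itsp c j X) Y (itdom c j X V) (G j)) \<and>
     (\<forall>j<k. is_dq c (itsp c j X) Y (itdom c j X V) (G j) (G (Suc j))))"

text \<open>The (unique, by (III)) first difference quotient, and derivatives.\<close>
definition dq :: "('k::comm_ring_1, 'a) c0concept \<Rightarrow> ('k, 'a) tmod \<Rightarrow> ('k, 'a) tmod \<Rightarrow> ('k, 'a) val set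
     \<Rightarrow> (('k, 'a) val \<Rightarrow> ('k, 'a) val) \<Rightarrow> ('k, 'a) val \<Rightarrow> ('k, 'a) val" where
  "dq c X Y V g = (SOME g1. is_dq c X Y V g g1)"

definition dd :: "('k::comm_ring_1, 'a) c0concept \<Rightarrow> ('k, 'a) tmod \<Rightarrow> ('k, 'a) tmod \<Rightarrow> ('k, 'a) val set
     \<Rightarrow> (('k, 'a) val \<Rightarrow> ('k, 'a) val) \<Rightarrow> ('k, 'a) val \<Rightarrow> ('k, 'a) val \<Rightarrow> ('k, 'a) val" where
  "dd c X Y V g x v = dq c X Y V g (Pr x (Pr v (Sc 0)))"

definition dd2 :: "('k::comm_ring_1, 'a) c0concept \<Rightarrow> ('k, 'a) tmod \<Rightarrow> ('k, 'a) tmod \<Rightarrow> ('k, 'a) val set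
     \<Rightarrow> (('k, 'a) val \<Rightarrow> ('k, 'a) val) \<Rightarrow> ('k, 'a) val \<Rightarrow> ('k, 'a) val \<Rightarrow> ('k, 'a) val \<Rightarrow> ('k, 'a) val" where
  "dd2 c X Y V g x v w = dd c X Y V (\<lambda>y. dd c X Y V g y w) x v"

definition is_linear_map :: "('k::comm_ring_1, 'a) tmod \<Rightarrow> ('k, 'a) tmod \<Rightarrow> (('k, 'a) val \<Rightarrow> ('k, 'a) val) \<Rightarrow> bool" where
  "is_linear_map E F L \<longleftrightarrow>
     (\<forall>h1\<in>mcar E. \<forall>h2\<in>mcar E. L (madd E h1 h2) = madd F (L h1) (L h2)) \<and>
     (\<forall>r. \<forall>h\<in>mcar E. L (msmul E r h) = msmul F r (L h))"

definition is_bilinear_map :: "('k::comm_ring_1, 'a) tmod \<Rightarrow> ('k, 'a) tmod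
     \<Rightarrow> (('k, 'a) val \<Rightarrow> ('k, 'a) val \<Rightarrow> ('k, 'a) val) \<Rightarrow> bool" where
  "is_bilinear_map E F B \<longleftrightarrow>
     (\<forall>h1\<in>mcar E. is_linear_map E F (\<lambda>h2. B h1 h2)) \<and>
     (\<forall>h2\<in>mcar E. is_linear_map E F (\<lambda>h1. B h1 h2))"

definition is_quadratic_form :: "('k::comm_ring_1, 'a) tmod \<Rightarrow> ('k, 'a) tmod \<Rightarrow> (('k, 'a) val \<Rightarrow> ('k, 'a) val) \<Rightarrow> bool" where
  "is_quadratic_form E F q \<longleftrightarrow>
     (\<forall>t. \<forall>h\<in>mcar E. q (msmul E t h) = msmul F (t ^ 2) (q h)) \<and>
     is_bilinear_map E F (\<lambda>h1 h2. msub F (msub F (q (madd E h1 h2)) (q h1)) (q h2))"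

end

theory Submission
  imports Defs
begin

locale tm = fixes E :: "('k::comm_ring_1, 'a) tmod" assumes tm: "is_tmod E"
begin

lemma car_add[simp]: "x \<in> mcar E \<Longrightarrow> y \<in> mcar E \<Longrightarrow> madd E x y \<in> mcar E"
  using tm unfolding is_tmod_def apply (elim conjE) by metis
lemma car_smul[simp]: "x \<in> mcar E \<Longrightarrow> msmul E r x \<in> mcar E"
  using tm unfolding is_tmod_def apply (elim conjE) by metis
lemma car_zero[simp]: "mzero E \<in> mcar E"
  using tm unfolding is_tmod_def apply (elim conjE) by metis
lemma topsp: "topspace (mtop E) = mcar E"
  using tm unfolding is_tmod_def apply (elim conjE) by metis
lemma add_assoc: "x \<in> mcar E \<Longrightarrow> y \<in> mcar E \<Longrightarrow> z \<in> mcar E \<Longrightarrow>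
   madd E (madd E x y) z = madd E x (madd E y z)"
  using tm unfolding is_tmod_def apply (elim conjE) by metis
lemma add_comm: "x \<in> mcar E \<Longrightarrow> y \<in> mcar E \<Longrightarrow> madd E x y = madd E y x"
  using tm unfolding is_tmod_def apply (elim conjE) by metis
lemma add_lcomm: "x \<in> mcar E \<Longrightarrow> y \<in> mcar E \<Longrightarrow> z \<in> mcar E \<Longrightarrow>
   madd E x (madd E y z) = madd E y (madd E x z)"
  by (metis add_assoc add_comm)
lemmas add_ac = add_assoc add_comm add_lcomm
lemma zero_l[simp]: "x \<in> mcar E \<Longrightarrow> madd E (mzero E) x = x"
  using tm unfolding is_tmod_def apply (elim conjE) by metis
lemma zero_r[simp]: "x \<in> mcar E \<Longrightarrow> madd E x (mzero E) = x"
  using add_comm zero_l by auto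
lemma smul_add: "x \<in> mcar E \<Longrightarrow> y \<in> mcar E \<Longrightarrow> msmul E r (madd E x y) = madd E (msmul E r x) (msmul E r y)"
  using tm unfolding is_tmod_def apply (elim conjE) by metis
lemma add_smul: "x \<in> mcar E \<Longrightarrow> msmul E (r + s) x = madd E (msmul E r x) (msmul E s x)"
  using tm unfolding is_tmod_def apply (elim conjE) by metis
lemma smul_smul[simp]: "x \<in> mcar E \<Longrightarrow> msmul E r (msmul E s x) = msmul E (r * s) x"
  using tm unfolding is_tmod_def apply (elim conjE) by metis
lemma smul_one[simp]: "x \<in> mcar E \<Longrightarrow> msmul E 1 x = x"
  using tm unfolding is_tmod_def apply (elim conjE) by metis
lemma ex_inv: "x \<in> mcar E \<Longrightarrow> \<exists>y\<in>mcar E. madd E x y = mzero E"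
  using tm unfolding is_tmod_def apply (elim conjE) by metis
lemma cancel_r: assumes "x \<in> mcar E" "y \<in> mcar E" "z \<in> mcar E" "madd E x z = madd E y z"
  shows "x = y"
proof -
  obtain w where w: "w \<in> mcar E" "madd E z w = mzero E" using ex_inv assms by blast
  have "x = madd E (madd E x z) w" using assms w by (metis add_assoc zero_r)
  also have "\<dots> = madd E (madd E y z) w" using assms by simp
  also have "\<dots> = y" using assms w by (metis add_assoc zero_r)
  finally show ?thesis .
qed
lemma smul_zero_l[simp]: "x \<in> mcar E \<Longrightarrow> msmul E 0 x = mzero E"
  using cancel_r[of "msmul E 0 x" "mzero E" "msmul E 0 x"] add_smul[of x 0 0] by simp
lemma smul_zero_r[simp]: "msmul E r (mzero E) = mzero E"
  using smul_smul[of "mzero E" r 0] smul_zero_l[of "mzero E"] by simp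
lemma neg_r: "x \<in> mcar E \<Longrightarrow> madd E x (msmul E (-1) x) = mzero E"
  using add_smul[of x 1 "-1"] by simp
lemma msub_eq: "a \<in> mcar E \<Longrightarrow> b \<in> mcar E \<Longrightarrow> c \<in> mcar E \<Longrightarrow>
   (msub E a b = c) = (a = madd E c b)"
  unfolding msub_def
  by (metis add_assoc add_comm car_smul neg_r zero_r cancel_r)
lemma car_sub[simp]: "x \<in> mcar E \<Longrightarrow> y \<in> mcar E \<Longrightarrow> msub E x y \<in> mcar E"
  unfolding msub_def by simp
lemma sub_add: "a \<in> mcar E \<Longrightarrow> b \<in> mcar E \<Longrightarrow> msub E (madd E a b) b = a"
  using msub_eq by simp
lemma smul_sub: "a \<in> mcar E \<Longrightarrow> b \<in> mcar E \<Longrightarrow> msmul E r (msub E a b) = msub E (msmul E r a) (msmul E r b)"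
  unfolding msub_def by (simp add: smul_add mult.commute)
lemma unit_cancel: assumes "t \<in> kunits" "x \<in> mcar E" "y \<in> mcar E" "msmul E t x = msmul E t y"
  shows "x = y"
proof -
  obtain s where s: "s * t = 1" using assms(1) unfolding kunits_def
    by (metis dvdE mem_Collect_eq mult.commute)
  then show ?thesis by (metis assms(2,3,4) smul_smul smul_one)
qed

lemma msumn_car[simp]: "(\<And>j. j < n \<Longrightarrow> h j \<in> mcar E) \<Longrightarrow> msumn E n h \<in> mcar E"
  by (induction n) auto
lemma msumn_shift: "(\<And>j. j \<le> n \<Longrightarrow> h j \<in> mcar E) \<Longrightarrow>
   msumn E (Suc n) h = madd E (h 0) (msumn E n (\<lambda>j. h (Suc j)))"
proof (induction n)
  case 0 then show ?case by simp
next
  case (Suc n)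
  have "msumn E (Suc (Suc n)) h = madd E (madd E (h 0) (msumn E n (\<lambda>j. h (Suc j)))) (h (Suc n))"
    using Suc by simp
  also have "\<dots> = madd E (h 0) (msumn E (Suc n) (\<lambda>j. h (Suc j)))"
    using Suc.prems by (simp add: add_assoc)
  finally show ?case .
qed
lemma smul_msumn: "(\<And>j. j < n \<Longrightarrow> h j \<in> mcar E) \<Longrightarrow>
   msmul E r (msumn E n h) = msumn E n (\<lambda>j. msmul E r (h j))"
  by (induction n) (auto simp: smul_add)

lemma sub_add2: "a \<in> mcar E \<Longrightarrow> b \<in> mcar E \<Longrightarrow> msub E (madd E a b) a = b"
  using msub_eq add_comm by simp
lemma add_sub: "a \<in> mcar E \<Longrightarrow> b \<in> mcar E \<Longrightarrow> madd E (msub E a b) b = a"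
  using msub_eq by (metis car_sub)
lemma cancel_l: "a \<in> mcar E \<Longrightarrow> x \<in> mcar E \<Longrightarrow> y \<in> mcar E \<Longrightarrow> madd E a x = madd E a y \<Longrightarrow> x = y"
  using cancel_r add_comm by metis
lemma sub_chain: assumes "a \<in> mcar E" "b \<in> mcar E" "c \<in> mcar E"
  shows "madd E (msub E a b) (msub E b c) = msub E a c"
proof -
  have "a = madd E (madd E (msub E a b) (msub E b c)) c"
    using assms by (simp add: add_assoc add_sub)
  then show ?thesis using assms msub_eq by (metis car_add car_sub)
qed
lemma sub_swap: assumes "x \<in> mcar E" "a \<in> mcar E" "b \<in> mcar E"
  shows "msub E (msub E x a) b = msub E (msub E x b) a"
proof -
  have "x = madd E (madd E (msub E (msub E x a) b) a) b"
    using assms by (metis add_sub add_assoc add_comm car_sub)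
  then have "msub E x b = madd E (msub E (msub E x a) b) a" using assms msub_eq by (metis car_add car_sub)
  then show ?thesis using assms msub_eq by (metis car_sub)
qed
lemma grp_id: assumes "a0 \<in> mcar E" "A1 \<in> mcar E" "A2 \<in> mcar E" "B12 \<in> mcar E" "B1 \<in> mcar E" "B2 \<in> mcar E"
  shows "msub E (msub E (madd E a0 (madd E (madd E A1 A2) B12)) (madd E a0 (madd E A1 B1)))
           (msub E (madd E a0 (madd E A2 B2)) a0) = msub E (msub E B12 B1) B2"
proof -
  define W where "W = msub E (msub E B12 B1) B2"
  have W: "W \<in> mcar E" using assms W_def by simp
  have B12: "B12 = madd E (madd E W B2) B1" using assms W_def by (simp add: add_sub)
  have D2: "msub E (madd E a0 (madd E A2 B2)) a0 = madd E A2 B2" using assms by (simp add: sub_add2)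
  have "madd E a0 (madd E (madd E A1 A2) B12) = madd E (madd E A2 (madd E W B2)) (madd E a0 (madd E A1 B1))"
    unfolding B12 using assms W by (simp add: add_ac)
  then have D1: "msub E (madd E a0 (madd E (madd E A1 A2) B12)) (madd E a0 (madd E A1 B1)) = madd E A2 (madd E W B2)"
    using assms W by (simp add: sub_add)
  have "madd E A2 (madd E W B2) = madd E W (madd E A2 B2)" using assms W by (simp add: add_ac)
  then show ?thesis unfolding D1 D2 W_def[symmetric] using assms W by (simp add: sub_add)
qed

end

lemma Kmod_simps[simp]: "mcar (Kmod c) = range Sc" "mzero (Kmod c) = Sc 0"
  "madd (Kmod c) x y = Sc (unSc x + unSc y)" "msmul (Kmod c) r x = Sc (r * unSc x)"
  "mtop (Kmod c) = pullback_topology (range Sc) unSc (Ktop c)"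
  by (simp_all add: Kmod_def)

lemma prodm_simps[simp]: "mcar (prodm c E1 E2) = pset (mcar E1) (mcar E2)"
  "mzero (prodm c E1 E2) = Pr (mzero E1) (mzero E2)"
  "madd (prodm c E1 E2) p q = Pr (madd E1 (vfst p) (vfst q)) (madd E2 (vsnd p) (vsnd q))"
  "msmul (prodm c E1 E2) r p = Pr (msmul E1 r (vfst p)) (msmul E2 r (vsnd p))"
  "mtop (prodm c E1 E2) = ptop c E1 E2"
  by (simp_all add: prodm_def)

lemma pset_Pr[simp]: "Pr x y \<in> pset A B \<longleftrightarrow> x \<in> A \<and> y \<in> B"
  by (simp add: pset_def)

lemma V1_Pr[simp]: "Pr x (Pr v t) \<in> V1 c X V \<longleftrightarrow>
   x \<in> V \<and> v \<in> mcar X \<and> t \<in> range Sc \<and> madd X x (msmul X (unSc t) v) \<in> V"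
  by (auto simp: V1_def)

locale cc = fixes c :: "('k::comm_ring_1, 'a) c0concept" assumes conc: "is_C0_concept c"
begin

abbreviation "K \<equiv> Kmod c"
abbreviation "C \<equiv> C0 c"
abbreviation "P \<equiv> prodm c"

lemmas CA = conc[unfolded is_C0_concept_def Let_def]

lemma Ktop_UNIV: "topspace (Ktop c) = UNIV" using CA[THEN conjunct1] by assumption
lemma KM[simp]: "K \<in> Mods c" using CA[THEN conjunct2, THEN conjunct1] by blast
lemma tmodM: "E \<in> Mods c \<Longrightarrow> is_tmod E" using CA[THEN conjunct2, THEN conjunct2, THEN conjunct1] by blast
lemma tmM: "E \<in> Mods c \<Longrightarrow> tm E" using tmodM by (simp add: tm_def)
lemma PM[simp]: "E1 \<in> Mods c \<Longrightarrow> E2 \<in> Mods c \<Longrightarrow> P E1 E2 \<in> Mods c" using CA[THEN conjunct2, THEN conjunct2, THEN conjunct2, THEN conjunct1] by blast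
lemma C_props: "C E F U g \<Longrightarrow> E \<in> Mods c \<and> F \<in> Mods c \<and> openin (mtop E) U \<and>
     continuous_map (subtopology (mtop E) U) (mtop F) g"
  using CA[THEN conjunct2, THEN conjunct2, THEN conjunct2, THEN conjunct2, THEN conjunct1] by blast
lemma C_ext: "C E F U g \<Longrightarrow> (\<And>x. x \<in> U \<Longrightarrow> g x = g' x) \<Longrightarrow> C E F U g'"
  using CA[THEN conjunct2, THEN conjunct2, THEN conjunct2, THEN conjunct2, THEN conjunct2, THEN conjunct1] by blast
lemma C_comp: "C E F U g \<Longrightarrow> C F G V h \<Longrightarrow> g ` U \<subseteq> V \<Longrightarrow> C E G U (h \<circ> g)"
  using CA[THEN conjunct2, THEN conjunct2, THEN conjunct2, THEN conjunct2, THEN conjunct2, THEN conjunct2, THEN conjunct1] by blast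
lemma C_id: "E \<in> Mods c \<Longrightarrow> openin (mtop E) U \<Longrightarrow> C E E U id"
  using CA[THEN conjunct2, THEN conjunct2, THEN conjunct2, THEN conjunct2, THEN conjunct2, THEN conjunct2, THEN conjunct2, THEN conjunct1] by blast
lemma C_aff: "E \<in> Mods c \<Longrightarrow> b \<in> mcar E \<Longrightarrow> C E E (mcar E) (\<lambda>x. madd E (msmul E r x) b)"
  using CA[THEN conjunct2, THEN conjunct2, THEN conjunct2, THEN conjunct2, THEN conjunct2, THEN conjunct2, THEN conjunct2, THEN conjunct2, THEN conjunct1] by blast
lemma C_line: "E \<in> Mods c \<Longrightarrow> v \<in> mcar E \<Longrightarrow> x \<in> mcar E \<Longrightarrow>
   C K E (mcar K) (\<lambda>t. madd E (msmul E (unSc t) v) x)"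
  using CA[THEN conjunct2, THEN conjunct2, THEN conjunct2, THEN conjunct2, THEN conjunct2, THEN conjunct2, THEN conjunct2, THEN conjunct2, THEN conjunct2, THEN conjunct1] by blast
lemma C_III: "C K F U g \<Longrightarrow> C K F U h \<Longrightarrow> (\<And>t. t \<in> U \<Longrightarrow> t \<in> Sc ` kunits \<Longrightarrow> g t = h t)
   \<Longrightarrow> t \<in> U \<Longrightarrow> g t = h t"
proof -
  have "\<forall>F U g h. C K F U g \<and> C K F U h \<and> (\<forall>t\<in>U \<inter> Sc ` kunits. g t = h t)
          \<longrightarrow> (\<forall>t\<in>U. g t = h t)" using CA[THEN conjunct2, THEN conjunct2, THEN conjunct2, THEN conjunct2, THEN conjunct2, THEN conjunct2, THEN conjunct2, THEN conjunct2, THEN conjunct2, THEN conjunct2, THEN conjunct2, THEN conjunct2, THEN conjunct2, THEN conjunct2, THEN conjunct2, THEN conjunct2, THEN conjunct2, THEN conjunct2] by assumption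
  then show "C K F U g \<Longrightarrow> C K F U h \<Longrightarrow> (\<And>t. t \<in> U \<Longrightarrow> t \<in> Sc ` kunits \<Longrightarrow> g t = h t)
   \<Longrightarrow> t \<in> U \<Longrightarrow> g t = h t" by blast
qed
lemma C_fst: "E1 \<in> Mods c \<Longrightarrow> E2 \<in> Mods c \<Longrightarrow> C (P E1 E2) E1 (mcar (P E1 E2)) vfst"
  using CA[THEN conjunct2, THEN conjunct2, THEN conjunct2, THEN conjunct2, THEN conjunct2, THEN conjunct2, THEN conjunct2, THEN conjunct2, THEN conjunct2, THEN conjunct2, THEN conjunct2, THEN conjunct2, THEN conjunct2, THEN conjunct1] by blast
lemma C_snd: "E1 \<in> Mods c \<Longrightarrow> E2 \<in> Mods c \<Longrightarrow> C (P E1 E2) E2 (mcar (P E1 E2)) vsnd"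
  using CA[THEN conjunct2, THEN conjunct2, THEN conjunct2, THEN conjunct2, THEN conjunct2, THEN conjunct2, THEN conjunct2, THEN conjunct2, THEN conjunct2, THEN conjunct2, THEN conjunct2, THEN conjunct2, THEN conjunct2, THEN conjunct1] by blast
lemma C_pairl: "E1 \<in> Mods c \<Longrightarrow> E2 \<in> Mods c \<Longrightarrow> y \<in> mcar E2 \<Longrightarrow> C E1 (P E1 E2) (mcar E1) (\<lambda>v. Pr v y)"
  using CA[THEN conjunct2, THEN conjunct2, THEN conjunct2, THEN conjunct2, THEN conjunct2, THEN conjunct2, THEN conjunct2, THEN conjunct2, THEN conjunct2, THEN conjunct2, THEN conjunct2, THEN conjunct2, THEN conjunct2, THEN conjunct1] by blast
lemma C_prod: "C E1 F1 U1 f1 \<Longrightarrow> C E2 F2 U2 f2 \<Longrightarrow>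
   C (P E1 E2) (P F1 F2) (pset U1 U2) (\<lambda>p. Pr (f1 (vfst p)) (f2 (vsnd p)))"
  using CA[THEN conjunct2, THEN conjunct2, THEN conjunct2, THEN conjunct2, THEN conjunct2, THEN conjunct2, THEN conjunct2, THEN conjunct2, THEN conjunct2, THEN conjunct2, THEN conjunct2, THEN conjunct2, THEN conjunct2, THEN conjunct2, THEN conjunct1] by blast
lemma C_diag: "E \<in> Mods c \<Longrightarrow> C E (P E E) (mcar E) (\<lambda>x. Pr x x)"
  using CA[THEN conjunct2, THEN conjunct2, THEN conjunct2, THEN conjunct2, THEN conjunct2, THEN conjunct2, THEN conjunct2, THEN conjunct2, THEN conjunct2, THEN conjunct2, THEN conjunct2, THEN conjunct2, THEN conjunct2, THEN conjunct2, THEN conjunct2, THEN conjunct1] by blast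
lemma C_add: "E \<in> Mods c \<Longrightarrow> C (P E E) E (mcar (P E E)) (\<lambda>p. madd E (vfst p) (vsnd p))"
  using CA[THEN conjunct2, THEN conjunct2, THEN conjunct2, THEN conjunct2, THEN conjunct2, THEN conjunct2, THEN conjunct2, THEN conjunct2, THEN conjunct2, THEN conjunct2, THEN conjunct2, THEN conjunct2, THEN conjunct2, THEN conjunct2, THEN conjunct2, THEN conjunct2, THEN conjunct2, THEN conjunct1] by blast
lemma C_smul: "E \<in> Mods c \<Longrightarrow> C (P K E) E (mcar (P K E)) (\<lambda>p. msmul E (unSc (vfst p)) (vsnd p))"
  using CA[THEN conjunct2, THEN conjunct2, THEN conjunct2, THEN conjunct2, THEN conjunct2, THEN conjunct2, THEN conjunct2, THEN conjunct2, THEN conjunct2, THEN conjunct2, THEN conjunct2, THEN conjunct2, THEN conjunct2, THEN conjunct2, THEN conjunct2, THEN conjunct2, THEN conjunct2, THEN conjunct1] by blast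

lemma C_open: "C E F U g \<Longrightarrow> openin (mtop E) U" using C_props by blast
lemma C_M1: "C E F U g \<Longrightarrow> E \<in> Mods c" using C_props by blast
lemma C_M2: "C E F U g \<Longrightarrow> F \<in> Mods c" using C_props by blast
lemma C_dom: assumes "C E F U g" shows "U \<subseteq> mcar E"
proof -
  have "openin (mtop E) U" "E \<in> Mods c" using C_props[OF assms] by auto
  then show ?thesis using openin_subset tm.topsp[OF tmM] by metis
qed
lemma C_car: assumes "C E F U g" "x \<in> U" shows "g x \<in> mcar F"
proof -
  have cm: "continuous_map (subtopology (mtop E) U) (mtop F) g" and F: "F \<in> Mods c"
    using C_props[OF assms(1)] by auto
  have "g ` topspace (subtopology (mtop E) U) \<subseteq> topspace (mtop F)"
    by (rule continuous_map_image_subset_topspace[OF cm])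
  moreover have "x \<in> topspace (subtopology (mtop E) U)"
    using C_dom[OF assms(1)] assms(2) tm.topsp[OF tmM[OF C_M1[OF assms(1)]]] by auto
  ultimately show ?thesis using tm.topsp[OF tmM[OF F]] by blast
qed

lemma C_comp': "C E F U g \<Longrightarrow> C F G V h \<Longrightarrow> (\<And>x. x \<in> U \<Longrightarrow> g x \<in> V) \<Longrightarrow> C E G U (\<lambda>x. h (g x))"
  using C_comp[of E F U g G V h] by (auto simp: comp_def)

lemma C_restrict: "C X Y U g \<Longrightarrow> openin (mtop X) V \<Longrightarrow> V \<subseteq> U \<Longrightarrow> C X Y V g"
proof -
  assume a: "C X Y U g" "openin (mtop X) V" "V \<subseteq> U"
  have "C X X V id" using C_id[OF C_M1[OF a(1)] a(2)] .
  then have "C X Y V (g \<circ> id)" using C_comp[of X X V id Y U g] a by auto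
  then show ?thesis by simp
qed

lemma C_pair: assumes "C X Y1 V g1" "C X Y2 V g2"
  shows "C X (P Y1 Y2) V (\<lambda>x. Pr (g1 x) (g2 x))"
proof -
  have X: "X \<in> Mods c" using assms C_M1 by blast
  have d: "C X (P X X) V (\<lambda>x. Pr x x)"
    using C_restrict[OF C_diag[OF X]] C_open[OF assms(1)] C_dom[OF assms(1)] by blast
  have p: "C (P X X) (P Y1 Y2) (pset V V) (\<lambda>p. Pr (g1 (vfst p)) (g2 (vsnd p)))"
    using C_prod assms by blast
  have "C X (P Y1 Y2) V (\<lambda>x. Pr (g1 (vfst (Pr x x))) (g2 (vsnd (Pr x x))))"
    using C_comp'[OF d p] by simp
  then show ?thesis by simp
qed

lemma C_const: assumes "X \<in> Mods c" "Y \<in> Mods c" "openin (mtop X) V" "b \<in> mcar Y"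
  shows "C X Y V (\<lambda>_. b)"
proof -
  have "C X Y (mcar X) (\<lambda>v. vsnd (Pr v b))"
    using C_comp'[OF C_pairl[OF assms(1,2,4)] C_snd[OF assms(1,2)]] assms by simp
  then have "C X Y (mcar X) (\<lambda>_. b)" by simp
  then show ?thesis using C_restrict assms openin_subset tm.topsp[OF tmM[OF assms(1)]] by metis
qed

lemma C_sum: assumes "C X Y V g1" "C X Y V g2" shows "C X Y V (\<lambda>x. madd Y (g1 x) (g2 x))"
proof -
  have Y: "Y \<in> Mods c" using assms C_M2 by blast
  have "C X Y V (\<lambda>x. madd Y (vfst (Pr (g1 x) (g2 x))) (vsnd (Pr (g1 x) (g2 x))))"
    using C_comp'[OF C_pair[OF assms] C_add[OF Y]] C_car[OF assms(1)] C_car[OF assms(2)] by simp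
  then show ?thesis by simp
qed

lemma C_smulf: assumes "C X K V s" "C X Y V g" shows "C X Y V (\<lambda>x. msmul Y (unSc (s x)) (g x))"
proof -
  have Y: "Y \<in> Mods c" using assms C_M2 by blast
  have "C X Y V (\<lambda>x. msmul Y (unSc (vfst (Pr (s x) (g x)))) (vsnd (Pr (s x) (g x))))"
    using C_comp'[OF C_pair[OF assms] C_smul[OF Y]] C_car[OF assms(1)] C_car[OF assms(2)]
    by (simp del: Kmod_simps)
  then show ?thesis by simp
qed

lemma C_scal: assumes "C X Y V g" shows "C X Y V (\<lambda>x. msmul Y r (g x))"
proof -
  have Y: "Y \<in> Mods c" using assms C_M2 by blast
  interpret Y: tm Y using tmodM[OF Y] by unfold_locales
  have "C X Y V (\<lambda>x. madd Y (msmul Y r (g x)) (mzero Y))"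
    using C_comp'[OF assms C_aff[OF Y, of "mzero Y" r]] C_car[OF assms] by auto
  then show ?thesis by (rule C_ext) (simp add: C_car[OF assms])
qed

lemma C_msumn: assumes "X \<in> Mods c" "Y \<in> Mods c" "openin (mtop X) V"
  "\<And>j. j < n \<Longrightarrow> C X Y V (g j)"
  shows "C X Y V (\<lambda>x. msumn Y n (\<lambda>j. g j x))"
  using assms(4)
proof (induction n)
  case 0 then show ?case using C_const assms tm.car_zero[OF tmM] by simp
next
  case (Suc n) then show ?case using C_sum by simp
qed

lemma C_Kid: "openin (mtop K) W \<Longrightarrow> C K K W (\<lambda>t. t)"
  using C_id[OF KM] by (metis C_ext id_apply)

lemma C_pow: assumes "C K Y W g" shows "C K Y W (\<lambda>t. msmul Y (unSc t ^ j) (g t))"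
proof (induction j)
  case 0
  have Y: "Y \<in> Mods c" using assms C_M2 by blast
  show ?case using assms by (rule C_ext) (simp add: tm.smul_one[OF tmM[OF Y]] C_car[OF assms])
next
  case (Suc j)
  have Y: "Y \<in> Mods c" using assms C_M2 by blast
  have "C K Y W (\<lambda>t. msmul Y (unSc t) (msmul Y (unSc t ^ j) (g t)))"
    using C_smulf[OF C_Kid[OF C_open[OF assms]] Suc] .
  then show ?case by (rule C_ext) (simp add: tm.smul_smul[OF tmM[OF Y]] C_car[OF assms])
qed

lemma C_Kscale: "C K K (mcar K) (\<lambda>t. Sc (s * unSc t))"
  using C_aff[OF KM, of "Sc 0" s] by (rule C_ext) auto

lemma topK: "topspace (mtop K) = range Sc"
  using tm.topsp[OF tmM[OF KM]] by simp

lemma W_open: assumes "E \<in> Mods c" "openin (mtop E) U" "x \<in> mcar E" "v \<in> mcar E"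
  shows "openin (mtop K) {t \<in> range Sc. madd E x (msmul E (unSc t) v) \<in> U}"
proof -
  interpret E: tm E using tmodM[OF assms(1)] by unfold_locales
  have "continuous_map (subtopology (mtop K) (mcar K)) (mtop E) (\<lambda>t. madd E (msmul E (unSc t) v) x)"
    using C_props[OF C_line[OF assms(1,4,3)]] by blast
  then have "continuous_map (mtop K) (mtop E) (\<lambda>t. madd E (msmul E (unSc t) v) x)"
    using topK by (metis subtopology_topspace Kmod_simps(1))
  then have "openin (mtop K) {t \<in> topspace (mtop K). madd E (msmul E (unSc t) v) x \<in> U}"
    using openin_continuous_map_preimage assms(2) by blast
  moreover have "{t \<in> topspace (mtop K). madd E (msmul E (unSc t) v) x \<in> U} =
     {t \<in> range Sc. madd E x (msmul E (unSc t) v) \<in> U}"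
    using topK E.add_comm assms by auto
  ultimately show ?thesis by simp
qed

end

lemma pset_D: "q \<in> pset A B \<Longrightarrow> vfst q \<in> A \<and> vsnd q \<in> B"
  by (auto simp: pset_def)

lemma msumn_cong: "(\<And>j. j < n \<Longrightarrow> h j = h' j) \<Longrightarrow> msumn E n h = msumn E n h'"
  by (induction n) auto

locale mainl = cc c for c :: "('k::comm_ring_1, 'a) c0concept" +
  fixes E F :: "('k, 'a) tmod"
    and U :: "('k, 'a) val set"
    and k :: nat
    and f :: "('k, 'a) val \<Rightarrow> ('k, 'a) val"
    and a :: "nat \<Rightarrow> ('k, 'a) val \<Rightarrow> ('k, 'a) val"
    and R :: "('k, 'a) val \<Rightarrow> ('k, 'a) val"
  assumes EM: "E \<in> Mods c" and FM: "F \<in> Mods c"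
    and Uopen: "openin (mtop E) U"
    and k2: "k \<ge> 2"
    and fCk: "Ck c k E F U f"
    and aC: "\<forall>j\<le>k. Ck c (k - j) (prodm c E E) F (pset U (mcar E)) (a j)"
    and RC: "C0 c (X3 c E) F (V1 c E U) R"
    and R0: "\<forall>x\<in>U. \<forall>h\<in>mcar E. R (Pr x (Pr h (Sc 0))) = mzero F"
    and expansion: "\<forall>x h t. Pr x (Pr h t) \<in> V1 c E U \<longrightarrow>
        f (madd E x (msmul E (unSc t) h)) =
        madd F (msumn F (Suc k) (\<lambda>j. msmul F (unSc t ^ j) (a j (Pr x h))))
               (msmul F (unSc t ^ k) (R (Pr x (Pr h t))))"
begin

sublocale E: tm E using tmM[OF EM] .
sublocale F: tm F using tmM[OF FM] .

definition "GG = (SOME G. G 0 = f \<and> (\<forall>j\<le>k. C0 c (itsp c j E) F (itdom c j E U) (G j)) \<and>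
     (\<forall>j<k. is_dq c (itsp c j E) F (itdom c j E U) (G j) (G (Suc j))))"

lemma GG: "GG 0 = f" "\<forall>j\<le>k. C0 c (itsp c j E) F (itdom c j E U) (GG j)"
     "\<forall>j<k. is_dq c (itsp c j E) F (itdom c j E U) (GG j) (GG (Suc j))"
proof -
  have "\<exists>G. G 0 = f \<and> (\<forall>j\<le>k. C0 c (itsp c j E) F (itdom c j E U) (G j)) \<and>
     (\<forall>j<k. is_dq c (itsp c j E) F (itdom c j E U) (G j) (G (Suc j)))"
    using fCk unfolding Ck_def .
  from someI_ex[OF this] show "GG 0 = f" "\<forall>j\<le>k. C0 c (itsp c j E) F (itdom c j E U) (GG j)"
     "\<forall>j<k. is_dq c (itsp c j E) F (itdom c j E U) (GG j) (GG (Suc j))"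
    unfolding GG_def by blast+
qed

lemma fC: "C E F U f" using GG(1) GG(2)[rule_format, of 0] by simp
lemma G1C: "C (X3 c E) F (V1 c E U) (GG 1)" using GG(2)[rule_format, of 1] k2 by simp
lemma G2C: "C (X3 c (X3 c E)) F (V1 c (X3 c E) (V1 c E U)) (GG 2)"
  using GG(2)[rule_format, of 2] k2 by (simp add: numeral_2_eq_2)
lemma dq0: "is_dq c E F U f (GG 1)" using GG(1) GG(3)[rule_format, of 0] k2 by simp
lemma dq1: "is_dq c (X3 c E) F (V1 c E U) (GG 1) (GG 2)"
  using GG(3)[rule_format, of 1] k2 by (simp add: numeral_2_eq_2)

lemma aCj: "j \<le> k \<Longrightarrow> C (P E E) F (pset U (mcar E)) (a j)"
  using aC unfolding Ck_def by fastforce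

lemma Usub: "U \<subseteq> mcar E" using C_dom[OF fC] .
lemma xE: "x \<in> U \<Longrightarrow> x \<in> mcar E" using Usub by blast

lemma a_car[simp]: "j \<le> k \<Longrightarrow> x \<in> U \<Longrightarrow> h \<in> mcar E \<Longrightarrow> a j (Pr x h) \<in> mcar F"
  using C_car[OF aCj] by simp
lemma R_car[simp]: "Pr x (Pr h t) \<in> V1 c E U \<Longrightarrow> R (Pr x (Pr h t)) \<in> mcar F"
  using C_car[OF RC] by blast
lemma f_car[simp]: "x \<in> U \<Longrightarrow> f x \<in> mcar F" using C_car[OF fC] .

definition "Ws x v = {t \<in> (range Sc :: ('k, 'a) val set). madd E x (msmul E (unSc t) v) \<in> U}"

lemma Ws_open: "x \<in> U \<Longrightarrow> v \<in> mcar E \<Longrightarrow> openin (mtop K) (Ws x v)"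
  unfolding Ws_def using W_open[OF EM Uopen xE] by blast
lemma Ws0: "x \<in> U \<Longrightarrow> v \<in> mcar E \<Longrightarrow> Sc 0 \<in> Ws x v"
  unfolding Ws_def using xE by simp

lemma C_emb: "x \<in> mcar E \<Longrightarrow> v \<in> mcar E \<Longrightarrow> openin (mtop K) W \<Longrightarrow>
   C K (X3 c E) W (\<lambda>t. Pr x (Pr v t))"
  unfolding X3_def
  by (intro C_pair C_const C_Kid) (auto simp: EM)

lemma dq_comp: assumes "is_dq c E F U g g1" "x \<in> U" "v \<in> mcar E" "openin (mtop K) W" "W \<subseteq> Ws x v"
  shows "C K F W (\<lambda>t. g1 (Pr x (Pr v t)))"
proof -
  have g1: "C (X3 c E) F (V1 c E U) g1" using assms(1) unfolding is_dq_def by blast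
  show ?thesis
    by (rule C_comp'[OF C_emb[OF xE[OF assms(2)] assms(3,4)] g1])
       (use assms(2,3,5) in \<open>auto simp: Ws_def\<close>)
qed

lemma dq_unique0: assumes "is_dq c E F U g g1" "is_dq c E F U g g1'" "x \<in> U" "v \<in> mcar E"
  shows "g1 (Pr x (Pr v (Sc 0))) = g1' (Pr x (Pr v (Sc 0)))"
proof -
  have c1: "C K F (Ws x v) (\<lambda>t. g1 (Pr x (Pr v t)))"
    using dq_comp[OF assms(1,3,4) Ws_open[OF assms(3,4)]] by blast
  have c2: "C K F (Ws x v) (\<lambda>t. g1' (Pr x (Pr v t)))"
    using dq_comp[OF assms(2,3,4) Ws_open[OF assms(3,4)]] by blast
  show ?thesis
  proof (rule C_III[OF c1 c2 _ Ws0[OF assms(3,4)]])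
    fix t :: "('k, 'a) val" assume t: "t \<in> Ws x v" "t \<in> Sc ` kunits"
    from t obtain s where s: "t = Sc s" "s \<in> kunits" by blast
    have m: "Pr x (Pr v t) \<in> V1 c E U" using t assms(3,4) by (auto simp: Ws_def)
    have "msmul F s (g1 (Pr x (Pr v t))) = msmul F s (g1' (Pr x (Pr v t)))"
      using assms(1,2) m s unfolding is_dq_def by (metis Defs.val.sel(1))
    then show "g1 (Pr x (Pr v t)) = g1' (Pr x (Pr v t))"
      using F.unit_cancel[OF s(2)] C_car[OF c1 t(1)] C_car[OF c2 t(1)] by blast
  qed
qed

lemma dq_eq: "is_dq c X Y V g g1 \<Longrightarrow> Pr x (Pr v t) \<in> V1 c X V \<Longrightarrow>
   msub Y (g (madd X x (msmul X (unSc t) v))) (g x) = msmul Y (unSc t) (g1 (Pr x (Pr v t)))"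
  unfolding is_dq_def by blast

lemma dq_C: "is_dq c X Y V g g1 \<Longrightarrow> C (X3 c X) Y (V1 c X V) g1"
  unfolding is_dq_def by blast

lemma Ws_sub: "Ws x v \<subseteq> mcar K" by (auto simp: Ws_def)

lemma C_lineW: assumes "x \<in> U" "v \<in> mcar E" "openin (mtop K) W" "W \<subseteq> mcar K"
  shows "C K E W (\<lambda>t. madd E x (msmul E (unSc t) v))"
proof -
  have "C K E W (\<lambda>t. madd E (msmul E (unSc t) v) x)"
    using C_restrict[OF C_line[OF EM assms(2) xE[OF assms(1)]] assms(3,4)] .
  then show ?thesis by (rule C_ext) (use assms xE in \<open>simp add: E.add_comm\<close>)
qed

lemma dq_add: assumes dq: "is_dq c E F U g g1" and gcar: "\<forall>y\<in>U. g y \<in> mcar F"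
  and x: "x \<in> U" and v: "v \<in> mcar E" and w: "w \<in> mcar E"
  shows "g1 (Pr x (Pr (madd E v w) (Sc 0))) = madd F (g1 (Pr x (Pr w (Sc 0)))) (g1 (Pr x (Pr v (Sc 0))))"
proof -
  define W where "W = Ws x v \<inter> Ws x (madd E v w)"
  have vw: "madd E v w \<in> mcar E" using v w by simp
  have Wo: "openin (mtop K) W" unfolding W_def using Ws_open[OF x v] Ws_open[OF x vw] by blast
  have W0: "Sc 0 \<in> W" unfolding W_def using Ws0[OF x v] Ws0[OF x vw] by blast
  have WK: "W \<subseteq> mcar K" unfolding W_def using Ws_sub by blast
  have pt: "\<And>s. madd E (madd E x (msmul E s v)) (msmul E s w) = madd E x (msmul E s (madd E v w))"
    using xE[OF x] v w by (simp add: E.smul_add E.add_assoc)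
  have c1: "C K F W (\<lambda>t. g1 (Pr x (Pr (madd E v w) t)))"
    using dq_comp[OF dq x vw Wo] W_def by blast
  have emb2: "C K (X3 c E) W (\<lambda>t. Pr (madd E x (msmul E (unSc t) v)) (Pr w t))"
    unfolding X3_def
    by (intro C_pair C_lineW C_const C_Kid) (use x v w Wo WK EM in auto)
  have c2a: "C K F W (\<lambda>t. g1 (Pr (madd E x (msmul E (unSc t) v)) (Pr w t)))"
    by (rule C_comp'[OF emb2 dq_C[OF dq]]) (use pt w in \<open>auto simp: W_def Ws_def\<close>)
  have c2b: "C K F W (\<lambda>t. g1 (Pr x (Pr v t)))"
    using dq_comp[OF dq x v Wo] W_def by blast
  have c2: "C K F W (\<lambda>t. madd F (g1 (Pr (madd E x (msmul E (unSc t) v)) (Pr w t))) (g1 (Pr x (Pr v t))))"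
    using C_sum[OF c2a c2b] .
  have key: "g1 (Pr x (Pr (madd E v w) t)) =
      madd F (g1 (Pr (madd E x (msmul E (unSc t) v)) (Pr w t))) (g1 (Pr x (Pr v t)))"
    if t: "t \<in> W" "t \<in> Sc ` kunits" for t
  proof -
    from t obtain s where s: "t = Sc s" "s \<in> kunits" by blast
    have xs: "madd E x (msmul E s v) \<in> U" and xsw: "madd E x (msmul E s (madd E v w)) \<in> U"
      using t s by (auto simp: W_def Ws_def)
    have m1: "Pr x (Pr (madd E v w) t) \<in> V1 c E U" using t s x vw by (auto simp: W_def Ws_def)
    have m2: "Pr (madd E x (msmul E s v)) (Pr w t) \<in> V1 c E U" using xs xsw s w pt by auto
    have m3: "Pr x (Pr v t) \<in> V1 c E U" using t s x v by (auto simp: W_def Ws_def)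
    have e1: "msub F (g (madd E x (msmul E s (madd E v w)))) (g x) = msmul F s (g1 (Pr x (Pr (madd E v w) t)))"
      using dq_eq[OF dq m1] s by simp
    have e2: "msub F (g (madd E x (msmul E s (madd E v w)))) (g (madd E x (msmul E s v))) =
       msmul F s (g1 (Pr (madd E x (msmul E s v)) (Pr w t)))"
      using dq_eq[OF dq m2] s pt by simp
    have e3: "msub F (g (madd E x (msmul E s v))) (g x) = msmul F s (g1 (Pr x (Pr v t)))"
      using dq_eq[OF dq m3] s by simp
    have a1: "g1 (Pr (madd E x (msmul E s v)) (Pr w t)) \<in> mcar F" using C_car[OF dq_C[OF dq] m2] .
    have a2: "g1 (Pr x (Pr v t)) \<in> mcar F" using C_car[OF dq_C[OF dq] m3] .
    have "msmul F s (madd F (g1 (Pr (madd E x (msmul E s v)) (Pr w t))) (g1 (Pr x (Pr v t)))) =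
       msmul F s (g1 (Pr x (Pr (madd E v w) t)))"
      using F.smul_add[OF a1 a2, of s] e1 e2 e3 F.sub_chain gcar x xs xsw by metis
    then show "g1 (Pr x (Pr (madd E v w) t)) =
      madd F (g1 (Pr (madd E x (msmul E (unSc t) v)) (Pr w t))) (g1 (Pr x (Pr v t)))"
      using F.unit_cancel[OF s(2)] C_car[OF c1 t(1)] a1 a2 s by simp
  qed
  from C_III[OF c1 c2 key W0] show ?thesis using xE[OF x] v by simp
qed

lemma dq_smul: assumes dq: "is_dq c E F U g g1" and gcar: "\<forall>y\<in>U. g y \<in> mcar F"
  and x: "x \<in> U" and v: "v \<in> mcar E"
  shows "g1 (Pr x (Pr (msmul E r v) (Sc 0))) = msmul F r (g1 (Pr x (Pr v (Sc 0))))"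
proof -
  define W where "W = Ws x (msmul E r v)"
  have rv: "msmul E r v \<in> mcar E" using v by simp
  have Wo: "openin (mtop K) W" unfolding W_def using Ws_open[OF x rv] .
  have W0: "Sc 0 \<in> W" unfolding W_def using Ws0[OF x rv] .
  have WK: "W \<subseteq> mcar K" unfolding W_def using Ws_sub by blast
  have c1: "C K F W (\<lambda>t. g1 (Pr x (Pr (msmul E r v) t)))"
    using dq_comp[OF dq x rv Wo] W_def by blast
  have sc: "C K K W (\<lambda>t. Sc (r * unSc t))" using C_restrict[OF C_Kscale Wo WK] .
  have c2a: "C K F W (\<lambda>t. g1 (Pr x (Pr v (Sc (r * unSc t)))))"
    by (rule C_comp'[OF sc dq_comp[OF dq x v Ws_open[OF x v] order_refl]])
       (use v in \<open>auto simp: W_def Ws_def mult.commute\<close>)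
  have c2: "C K F W (\<lambda>t. msmul F r (g1 (Pr x (Pr v (Sc (r * unSc t))))))"
    using C_scal[OF c2a] .
  have key: "g1 (Pr x (Pr (msmul E r v) t)) = msmul F r (g1 (Pr x (Pr v (Sc (r * unSc t)))))"
    if t: "t \<in> W" "t \<in> Sc ` kunits" for t
  proof -
    from t obtain s where s: "t = Sc s" "s \<in> kunits" by blast
    have m1: "Pr x (Pr (msmul E r v) t) \<in> V1 c E U" using t s x rv by (auto simp: W_def Ws_def)
    have m2: "Pr x (Pr v (Sc (r * s))) \<in> V1 c E U" using t s x v
      by (auto simp: W_def Ws_def mult.commute)
    have e1: "msub F (g (madd E x (msmul E (s * r) v))) (g x) = msmul F s (g1 (Pr x (Pr (msmul E r v) t)))"
      using dq_eq[OF dq m1] s v by simp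
    have e2: "msub F (g (madd E x (msmul E (r * s) v))) (g x) = msmul F (r * s) (g1 (Pr x (Pr v (Sc (r * s)))))"
      using dq_eq[OF dq m2] by simp
    have a2: "g1 (Pr x (Pr v (Sc (r * s)))) \<in> mcar F" using C_car[OF dq_C[OF dq] m2] .
    have "msmul F s (msmul F r (g1 (Pr x (Pr v (Sc (r * s)))))) = msmul F s (g1 (Pr x (Pr (msmul E r v) t)))"
      using e1 e2 a2 by (simp add: mult.commute)
    then show "g1 (Pr x (Pr (msmul E r v) t)) = msmul F r (g1 (Pr x (Pr v (Sc (r * unSc t)))))"
      using F.unit_cancel[OF s(2)] C_car[OF c1 t(1)] a2 s by simp
  qed
  from C_III[OF c1 c2 key W0] show ?thesis by simp
qed

lemma dq_linear: assumes dq: "is_dq c E F U g g1" and gcar: "\<forall>y\<in>U. g y \<in> mcar F" and x: "x \<in> U"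
  shows "is_linear_map E F (\<lambda>h. g1 (Pr x (Pr h (Sc 0))))"
  unfolding is_linear_map_def
proof (intro conjI ballI allI)
  fix h1 h2 assume "h1 \<in> mcar E" "h2 \<in> mcar E"
  moreover have "g1 (Pr x (Pr h1 (Sc 0))) \<in> mcar F" "g1 (Pr x (Pr h2 (Sc 0))) \<in> mcar F"
    using C_car[OF dq_C[OF dq]] x xE calculation by auto
  ultimately show "g1 (Pr x (Pr (madd E h1 h2) (Sc 0))) = madd F (g1 (Pr x (Pr h1 (Sc 0)))) (g1 (Pr x (Pr h2 (Sc 0))))"
    using dq_add[OF dq gcar x] F.add_comm by metis
next
  fix r h assume "h \<in> mcar E"
  then show "g1 (Pr x (Pr (msmul E r h) (Sc 0))) = msmul F r (g1 (Pr x (Pr h (Sc 0))))"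
    using dq_smul[OF dq gcar x] by blast
qed

lemma dq_is: "is_dq c E F U g g1 \<Longrightarrow> is_dq c E F U g (dq c E F U g)"
  unfolding dq_def by (rule someI[where P="is_dq c E F U g"])

lemma lin_cong: "is_linear_map E F L \<Longrightarrow> (\<And>h. h \<in> mcar E \<Longrightarrow> L h = L' h) \<Longrightarrow> is_linear_map E F L'"
  unfolding is_linear_map_def by simp

definition S :: "('k, 'a) val \<Rightarrow> nat \<Rightarrow> ('k, 'a) val \<Rightarrow> ('k, 'a) val \<Rightarrow> ('k, 'a) val" where
  "S x m h t = madd F (msumn F (Suc k - m) (\<lambda>j. msmul F (unSc t ^ j) (a (j + m) (Pr x h))))
      (msmul F (unSc t ^ (k - m)) (R (Pr x (Pr h t))))"

lemma S_car[simp]: assumes "m \<le> k" "Pr x (Pr h t) \<in> V1 c E U" shows "S x m h t \<in> mcar F"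
proof -
  have "x \<in> U" "h \<in> mcar E" using assms by auto
  then show ?thesis unfolding S_def using assms by (auto intro!: F.msumn_car)
qed

lemma S0: "Pr x (Pr h t) \<in> V1 c E U \<Longrightarrow> f (madd E x (msmul E (unSc t) h)) = S x 0 h t"
  using expansion unfolding S_def by simp

lemma Sstep: assumes m: "m < k" and V: "Pr x (Pr h t) \<in> V1 c E U"
  shows "S x m h t = madd F (a m (Pr x h)) (msmul F (unSc t) (S x (Suc m) h t))"
proof -
  have x: "x \<in> U" and h: "h \<in> mcar E" using V by auto
  have n1: "Suc k - m = Suc (k - m)" and n2: "k - m = Suc (k - Suc m)" and n3: "Suc k - Suc m = k - m"
    using m by arith+
  define \<phi> where "\<phi> j = msmul F (unSc t ^ j) (a (j + m) (Pr x h))" for j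
  define \<psi> where "\<psi> j = msmul F (unSc t ^ j) (a (j + Suc m) (Pr x h))" for j
  have \<phi>c: "\<phi> j \<in> mcar F" if "j \<le> k - m" for j using that x h m unfolding \<phi>_def by simp
  have \<psi>c: "\<psi> j \<in> mcar F" if "j < k - m" for j using that x h m unfolding \<psi>_def by simp
  have Rc: "R (Pr x (Pr h t)) \<in> mcar F" using V by simp
  have s1: "msumn F (Suc (k - m)) \<phi> = madd F (\<phi> 0) (msumn F (k - m) (\<lambda>j. \<phi> (Suc j)))"
    using F.msumn_shift \<phi>c by blast
  have s2: "msumn F (k - m) (\<lambda>j. \<phi> (Suc j)) = msumn F (k - m) (\<lambda>j. msmul F (unSc t) (\<psi> j))"
    by (rule msumn_cong) (use x h m in \<open>simp add: \<phi>_def \<psi>_def mult.commute\<close>)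
  have s3: "msumn F (k - m) (\<lambda>j. msmul F (unSc t) (\<psi> j)) = msmul F (unSc t) (msumn F (k - m) \<psi>)"
    using F.smul_msumn[of "k - m" \<psi>] \<psi>c by simp
  have r1: "msmul F (unSc t ^ (k - m)) (R (Pr x (Pr h t))) =
      msmul F (unSc t) (msmul F (unSc t ^ (k - Suc m)) (R (Pr x (Pr h t))))"
    using Rc n2 by simp
  have "S x m h t = madd F (madd F (a m (Pr x h)) (msmul F (unSc t) (msumn F (k - m) \<psi>)))
      (msmul F (unSc t) (msmul F (unSc t ^ (k - Suc m)) (R (Pr x (Pr h t)))))"
    unfolding S_def n1 using s1 s2 s3 r1 x h m unfolding \<phi>_def[abs_def] by simp
  also have "\<dots> = madd F (a m (Pr x h)) (msmul F (unSc t) (madd F (msumn F (k - m) \<psi>)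
      (msmul F (unSc t ^ (k - Suc m)) (R (Pr x (Pr h t))))))"
    using x h m Rc \<psi>c by (simp add: F.add_assoc F.smul_add)
  also have "\<dots> = madd F (a m (Pr x h)) (msmul F (unSc t) (S x (Suc m) h t))"
    unfolding S_def n3 \<psi>_def by simp
  finally show ?thesis .
qed

lemma S_zero: assumes m: "m \<le> k" and x: "x \<in> U" and h: "h \<in> mcar E"
  shows "S x m h (Sc 0) = a m (Pr x h)"
proof (cases "m < k")
  case True
  have V: "Pr x (Pr h (Sc 0)) \<in> V1 c E U" using x h xE by simp
  show ?thesis using Sstep[OF True V] S_car[OF _ V, of "Suc m"] True x h by simp
next
  case False
  then have mk: "m = k" using m by simp
  show ?thesis unfolding S_def mk using R0 x h by simp
qed

lemma S_C: assumes m: "m \<le> k" and x: "x \<in> U" and h: "h \<in> mcar E"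
  and Wo: "openin (mtop K) W" and Wsub: "W \<subseteq> Ws x h"
  shows "C K F W (\<lambda>t. S x m h t)"
proof -
  have c1: "C K F W (\<lambda>t. msumn F (Suc k - m) (\<lambda>j. msmul F (unSc t ^ j) (a (j + m) (Pr x h))))"
    by (rule C_msumn[OF KM FM Wo, where g = "\<lambda>j t. msmul F (unSc t ^ j) (a (j + m) (Pr x h))"])
       (rule C_pow, rule C_const, use KM FM Wo x h in auto)
  have cR: "C K F W (\<lambda>t. R (Pr x (Pr h t)))"
    by (rule C_comp'[OF C_emb[OF xE[OF x] h Wo] RC]) (use Wsub x h in \<open>auto simp: Ws_def\<close>)
  show ?thesis unfolding S_def by (rule C_sum[OF c1 C_pow[OF cR]])
qed

lemma a0: assumes x: "x \<in> U" and h: "h \<in> mcar E" shows "a 0 (Pr x h) = f x"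
proof -
  have V: "Pr x (Pr h (Sc 0)) \<in> V1 c E U" using x h xE by simp
  show ?thesis using S0[OF V] S_zero[of 0 x h] x h xE by simp
qed

lemma a1_G1: assumes x: "x \<in> U" and h: "h \<in> mcar E" shows "a 1 (Pr x h) = GG 1 (Pr x (Pr h (Sc 0)))"
proof -
  have Wo: "openin (mtop K) (Ws x h)" using Ws_open[OF x h] .
  have c1: "C K F (Ws x h) (\<lambda>t. GG 1 (Pr x (Pr h t)))" using dq_comp[OF dq0 x h Wo order_refl] .
  have c2: "C K F (Ws x h) (\<lambda>t. S x 1 h t)" using S_C[OF _ x h Wo order_refl] k2 by simp
  have key: "GG 1 (Pr x (Pr h t)) = S x 1 h t" if t: "t \<in> Ws x h" "t \<in> Sc ` kunits" for t
  proof -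
    from t obtain s where s: "t = Sc s" "s \<in> kunits" by blast
    have V: "Pr x (Pr h t) \<in> V1 c E U" using t x h by (auto simp: Ws_def)
    have "msmul F s (GG 1 (Pr x (Pr h t))) = msub F (f (madd E x (msmul E s h))) (f x)"
      using dq_eq[OF dq0 V] s by simp
    also have "\<dots> = msub F (madd F (f x) (msmul F s (S x 1 h t))) (f x)"
      using S0[OF V] Sstep[OF _ V, of 0] k2 s a0[OF x h] by simp
    also have "\<dots> = msmul F s (S x 1 h t)" using F.sub_add2 V k2 x by simp
    finally show ?thesis using F.unit_cancel[OF s(2)] C_car[OF c1 t(1)] C_car[OF c2 t(1)] by blast
  qed
  from C_III[OF c1 c2 key Ws0[OF x h]] show ?thesis using S_zero[of 1 x h] x h k2 by simp
qed

lemma dd_G1: assumes x: "x \<in> U" and h: "h \<in> mcar E" shows "dd c E F U f x h = GG 1 (Pr x (Pr h (Sc 0)))"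
  unfolding dd_def using dq_unique0[OF dq_is[OF dq0] dq0 x h] .

lemma a1_lin: assumes x: "x \<in> U" shows "is_linear_map E F (\<lambda>h. a 1 (Pr x h))"
  by (rule lin_cong[OF dq_linear[OF dq0 _ x]]) (use a1_G1 x in auto)

lemma expand2: assumes V: "Pr x (Pr h t) \<in> V1 c E U"
  shows "f (madd E x (msmul E (unSc t) h)) =
    madd F (f x) (msmul F (unSc t) (madd F (a 1 (Pr x h)) (msmul F (unSc t) (S x 2 h t))))"
proof -
  have x: "x \<in> U" and h: "h \<in> mcar E" using V by auto
  show ?thesis using S0[OF V] Sstep[OF _ V, of 0] Sstep[OF _ V, of 1] k2 a0[OF x h]
    by (simp add: numeral_2_eq_2)
qed

lemma a2_hom: assumes x: "x \<in> U" and h: "h \<in> mcar E"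
  shows "a 2 (Pr x (msmul E r h)) = msmul F (r ^ 2) (a 2 (Pr x h))"
proof -
  define W where "W = Ws x (msmul E r h)"
  have rh: "msmul E r h \<in> mcar E" using h by simp
  have Wo: "openin (mtop K) W" unfolding W_def using Ws_open[OF x rh] .
  have W0: "Sc 0 \<in> W" unfolding W_def using Ws0[OF x rh] .
  have WK: "W \<subseteq> mcar K" unfolding W_def using Ws_sub by blast
  have c1: "C K F W (\<lambda>t. S x 2 (msmul E r h) t)" using S_C[OF k2 x rh Wo] W_def by blast
  have sc: "C K K W (\<lambda>t. Sc (r * unSc t))" using C_restrict[OF C_Kscale Wo WK] .
  have c2a: "C K F W (\<lambda>t. S x 2 h (Sc (r * unSc t)))"
    by (rule C_comp'[OF sc S_C[OF k2 x h Ws_open[OF x h] order_refl]])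
       (use h in \<open>auto simp: W_def Ws_def mult.commute\<close>)
  have c2: "C K F W (\<lambda>t. msmul F (r ^ 2) (S x 2 h (Sc (r * unSc t))))"
    using C_scal[OF c2a] .
  have key: "S x 2 (msmul E r h) t = msmul F (r ^ 2) (S x 2 h (Sc (r * unSc t)))"
    if t: "t \<in> W" "t \<in> Sc ` kunits" for t
  proof -
    from t obtain s where s: "t = Sc s" "s \<in> kunits" by blast
    have V1': "Pr x (Pr (msmul E r h) t) \<in> V1 c E U" using t x rh by (auto simp: W_def Ws_def)
    have V2': "Pr x (Pr h (Sc (r * s))) \<in> V1 c E U" using t x h s
      by (auto simp: W_def Ws_def mult.commute)
    define A where "A = S x 2 (msmul E r h) t"
    define B where "B = S x 2 h (Sc (r * s))"
    define L where "L = a 1 (Pr x h)"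
    have Ac: "A \<in> mcar F" unfolding A_def using V1' k2 by simp
    have Bc: "B \<in> mcar F" unfolding B_def using V2' k2 by simp
    have Lc: "L \<in> mcar F" unfolding L_def using x h k2 by simp
    have lin: "a 1 (Pr x (msmul E r h)) = msmul F r L"
      using a1_lin[OF x] h unfolding is_linear_map_def L_def by blast
    have pt: "madd E x (msmul E (unSc t) (msmul E r h)) = madd E x (msmul E (unSc (Sc (r * s))) h)"
      using s h by (simp add: mult.commute)
    have "madd F (f x) (msmul F s (madd F (msmul F r L) (msmul F s A))) =
          madd F (f x) (msmul F (r * s) (madd F L (msmul F (r * s) B)))"
      using expand2[OF V1'] expand2[OF V2'] pt s lin unfolding A_def B_def L_def by simp
    then have "msmul F s (madd F (msmul F r L) (msmul F s A)) = msmul F (r * s) (madd F L (msmul F (r * s) B))"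
      by (rule F.cancel_l[rotated 3]) (use Ac Bc Lc x in simp_all)
    then have "madd F (msmul F (s * r) L) (msmul F (s * s) A) = madd F (msmul F (r * s) L) (msmul F (r * s * (r * s)) B)"
      using Ac Bc Lc by (simp add: F.smul_add)
    then have "madd F (msmul F (s * r) L) (msmul F (s * s) A) = madd F (msmul F (s * r) L) (msmul F (r * s * (r * s)) B)"
      by (simp add: mult.commute)
    then have e: "msmul F (s * s) A = msmul F (r * s * (r * s)) B"
      by (rule F.cancel_l[rotated 3]) (use Ac Bc Lc in simp_all)
    have u: "s * s \<in> kunits" using s(2) unfolding kunits_def by (simp add: mult_dvd_mono[of s 1 s 1, simplified])
    have "msmul F (s * s) A = msmul F (s * s) (msmul F (r ^ 2) B)"
      using e Bc by (simp add: power2_eq_square mult_ac)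
    then have "A = msmul F (r ^ 2) B" using F.unit_cancel[OF u] Ac Bc by simp
    then show ?thesis unfolding A_def B_def s by simp
  qed
  from C_III[OF c1 c2 key W0] show ?thesis using S_zero[OF k2 x rh] S_zero[OF k2 x h] by simp
qed

lemma X3_move: "h \<in> mcar E \<Longrightarrow>
  madd (X3 c E) (Pr x (Pr h (Sc t0))) (msmul (X3 c E) s (Pr v (Pr (mzero E) (Sc 0)))) =
  Pr (madd E x (msmul E s v)) (Pr h (Sc t0))"
  by (simp add: X3_def)

lemma C_sub: "C X F V g1 \<Longrightarrow> C X F V g2 \<Longrightarrow> C X F V (\<lambda>x. msub F (g1 x) (g2 x))"
  unfolding msub_def by (intro C_sum C_scal)

lemma ptE: "x \<in> mcar E \<Longrightarrow> h1 \<in> mcar E \<Longrightarrow> h2 \<in> mcar E \<Longrightarrow>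
  madd E (madd E x (msmul E s h1)) (msmul E s h2) = madd E x (msmul E s (madd E h1 h2))"
  by (simp add: E.smul_add E.add_assoc)

lemma expand2': assumes V: "Pr x (Pr h (Sc s)) \<in> V1 c E U"
  shows "f (madd E x (msmul E s h)) =
    madd F (f x) (madd F (msmul F s (a 1 (Pr x h))) (msmul F (s * s) (S x 2 h (Sc s))))"
proof -
  have x: "x \<in> U" and h: "h \<in> mcar E" using V by auto
  show ?thesis using expand2[OF V] x h k2 V by (simp add: F.smul_add)
qed

lemma B_G2: assumes x: "x \<in> U" and h1: "h1 \<in> mcar E" and h2: "h2 \<in> mcar E"
  shows "msub F (msub F (a 2 (Pr x (madd E h1 h2))) (a 2 (Pr x h1))) (a 2 (Pr x h2)) =
    GG 2 (Pr (Pr x (Pr h2 (Sc 0))) (Pr (Pr h1 (Pr (mzero E) (Sc 0))) (Sc 0)))"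
proof -
  define h12 where "h12 = madd E h1 h2"
  have h12: "h12 \<in> mcar E" using h1 h2 h12_def by simp
  define W where "W = Ws x h1 \<inter> Ws x h2 \<inter> Ws x h12"
  have Wo: "openin (mtop K) W" unfolding W_def using Ws_open[OF x h1] Ws_open[OF x h2] Ws_open[OF x h12] by blast
  have W0: "Sc 0 \<in> W" unfolding W_def using Ws0[OF x h1] Ws0[OF x h2] Ws0[OF x h12] by blast
  have WK: "W \<subseteq> mcar K" unfolding W_def using Ws_sub by blast
  define w0 where "w0 = Pr h1 (Pr (mzero E) (Sc 0))"
  have w0: "w0 \<in> mcar (X3 c E)" unfolding w0_def X3_def using h1 by simp
  have XM: "X3 c E \<in> Mods c" using C_M1[OF G1C] .
  have emb3: "C K (X3 c (X3 c E)) W (\<lambda>t. Pr (Pr x (Pr h2 t)) (Pr w0 t))"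
    unfolding X3_def[of c "X3 c E"]
    by (rule C_pair[OF C_emb[OF xE[OF x] h2 Wo] C_pair[OF C_const[OF KM XM Wo w0] C_Kid[OF Wo]]])
  have memb: "Pr (Pr x (Pr h2 t)) (Pr w0 t) \<in> V1 c (X3 c E) (V1 c E U)" if t: "t \<in> W" for t
  proof -
    from t obtain t0 where t0: "t = Sc t0" unfolding W_def Ws_def by blast
    have "madd E (madd E x (msmul E t0 h1)) (msmul E t0 h2) \<in> U"
      using ptE[OF xE[OF x] h1 h2] t t0 unfolding W_def Ws_def h12_def by auto
    then show ?thesis using t t0 x h1 h2 w0 X3_move[OF h2, of x t0 t0 h1]
      unfolding W_def Ws_def w0_def by auto
  qed
  have c1: "C K F W (\<lambda>t. GG 2 (Pr (Pr x (Pr h2 t)) (Pr w0 t)))"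
    by (rule C_comp'[OF emb3 G2C memb])
  have c2: "C K F W (\<lambda>t. msub F (msub F (S x 2 h12 t) (S x 2 h1 t)) (S x 2 h2 t))"
    by (intro C_sub S_C k2 x h1 h2 h12 Wo) (auto simp: W_def)
  have key: "GG 2 (Pr (Pr x (Pr h2 t)) (Pr w0 t)) = msub F (msub F (S x 2 h12 t) (S x 2 h1 t)) (S x 2 h2 t)"
    if t: "t \<in> W" "t \<in> Sc ` kunits" for t
  proof -
    from t obtain s where s: "t = Sc s" "s \<in> kunits" by blast
    have u: "s * s \<in> kunits" using s(2) unfolding kunits_def by (simp add: mult_dvd_mono[of s 1 s 1, simplified])
    have xs1: "madd E x (msmul E s h1) \<in> U" and xs2: "madd E x (msmul E s h2) \<in> U"
      and xs12: "madd E x (msmul E s h12) \<in> U" using t s by (auto simp: W_def Ws_def)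
    have V1h1: "Pr x (Pr h1 (Sc s)) \<in> V1 c E U" using xs1 x h1 by simp
    have V1h2: "Pr x (Pr h2 (Sc s)) \<in> V1 c E U" using xs2 x h2 by simp
    have V1h12: "Pr x (Pr h12 (Sc s)) \<in> V1 c E U" using xs12 x h12 by simp
    define p where "p = Pr x (Pr h2 t)"
    define p' where "p' = Pr (madd E x (msmul E s h1)) (Pr h2 t)"
    have pp': "madd (X3 c E) p (msmul (X3 c E) (unSc t) w0) = p'"
      unfolding p_def p'_def w0_def s using X3_move[OF h2] by simp
    have Q: "Pr p (Pr w0 t) \<in> V1 c (X3 c E) (V1 c E U)" using memb[OF t(1)] p_def by simp
    have e1: "msub F (GG 1 p') (GG 1 p) = msmul F s (GG 2 (Pr p (Pr w0 t)))"
      using dq_eq[OF dq1 Q] pp' s by simp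
    have pt12: "madd E (madd E x (msmul E s h1)) (msmul E s h2) = madd E x (msmul E s h12)"
      using ptE[OF xE[OF x] h1 h2] h12_def by simp
    have Vp': "p' \<in> V1 c E U" unfolding p'_def s using xs1 h2 pt12 xs12 by simp
    have Vp: "p \<in> V1 c E U" unfolding p_def s using V1h2 .
    have e2: "msub F (f (madd E x (msmul E s h12))) (f (madd E x (msmul E s h1))) = msmul F s (GG 1 p')"
      using dq_eq[OF dq0 Vp'[unfolded p'_def]] pt12 s unfolding p'_def by simp
    have e3: "msub F (f (madd E x (msmul E s h2))) (f x) = msmul F s (GG 1 p)"
      using dq_eq[OF dq0 Vp[unfolded p_def]] s unfolding p_def by simp
    have G1p: "GG 1 p \<in> mcar F" using C_car[OF G1C Vp] .
    have G1p': "GG 1 p' \<in> mcar F" using C_car[OF G1C Vp'] .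
    have G2Q: "GG 2 (Pr p (Pr w0 t)) \<in> mcar F" using C_car[OF G2C Q] .
    have lin: "a 1 (Pr x h12) = madd F (a 1 (Pr x h1)) (a 1 (Pr x h2))"
      using a1_lin[OF x] h1 h2 unfolding is_linear_map_def h12_def by blast
    define A1 where "A1 = msmul F s (a 1 (Pr x h1))"
    define A2 where "A2 = msmul F s (a 1 (Pr x h2))"
    define B12 where "B12 = msmul F (s * s) (S x 2 h12 (Sc s))"
    define B1 where "B1 = msmul F (s * s) (S x 2 h1 (Sc s))"
    define B2 where "B2 = msmul F (s * s) (S x 2 h2 (Sc s))"
    have cars: "A1 \<in> mcar F" "A2 \<in> mcar F" "B12 \<in> mcar F" "B1 \<in> mcar F" "B2 \<in> mcar F" "f x \<in> mcar F"
      unfolding A1_def A2_def B12_def B1_def B2_def using x h1 h2 k2 V1h1 V1h2 V1h12 by auto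
    have f12: "f (madd E x (msmul E s h12)) = madd F (f x) (madd F (madd F A1 A2) B12)"
      using expand2'[OF V1h12] lin x h1 h2 k2 unfolding A1_def A2_def B12_def by (simp add: F.smul_add)
    have f1: "f (madd E x (msmul E s h1)) = madd F (f x) (madd F A1 B1)"
      using expand2'[OF V1h1] unfolding A1_def B1_def by simp
    have f2: "f (madd E x (msmul E s h2)) = madd F (f x) (madd F A2 B2)"
      using expand2'[OF V1h2] unfolding A2_def B2_def by simp
    have "msmul F (s * s) (GG 2 (Pr p (Pr w0 t))) = msmul F s (msub F (GG 1 p') (GG 1 p))"
      using e1 G2Q by simp
    also have "\<dots> = msub F (msmul F s (GG 1 p')) (msmul F s (GG 1 p))"
      using F.smul_sub G1p G1p' by simp
    also have "\<dots> = msub F (msub F (f (madd E x (msmul E s h12))) (f (madd E x (msmul E s h1))))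
        (msub F (f (madd E x (msmul E s h2))) (f x))"
      using e2 e3 by simp
    also have "\<dots> = msub F (msub F B12 B1) B2"
      unfolding f12 f1 f2 using F.grp_id[OF cars(6,1,2,3,4,5)] by simp
    also have "\<dots> = msmul F (s * s) (msub F (msub F (S x 2 h12 (Sc s)) (S x 2 h1 (Sc s))) (S x 2 h2 (Sc s)))"
      unfolding B12_def B1_def B2_def using F.smul_sub V1h1 V1h2 V1h12 k2 by simp
    finally have "msmul F (s * s) (GG 2 (Pr p (Pr w0 t))) =
       msmul F (s * s) (msub F (msub F (S x 2 h12 (Sc s)) (S x 2 h1 (Sc s))) (S x 2 h2 (Sc s)))" .
    then have "GG 2 (Pr p (Pr w0 t)) = msub F (msub F (S x 2 h12 (Sc s)) (S x 2 h1 (Sc s))) (S x 2 h2 (Sc s))"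
      using F.unit_cancel[OF u] G2Q V1h1 V1h2 V1h12 k2 by simp
    then show ?thesis unfolding p_def s .
  qed
  from C_III[OF c1 c2 key W0] show ?thesis
    using S_zero[OF k2 x h1] S_zero[OF k2 x h2] S_zero[OF k2 x h12] unfolding w0_def h12_def by simp
qed

definition "g1' h2 = (\<lambda>q. GG 2 (Pr (Pr (vfst q) (Pr h2 (Sc 0))) (Pr (Pr (vfst (vsnd q)) (Pr (mzero E) (Sc 0))) (vsnd (vsnd q)))))"

lemma gg_G1: "y \<in> U \<Longrightarrow> h2 \<in> mcar E \<Longrightarrow> dd c E F U f y h2 = GG 1 (Pr y (Pr h2 (Sc 0)))"
  using dd_G1 .

lemma gg_car: "h2 \<in> mcar E \<Longrightarrow> \<forall>y\<in>U. dd c E F U f y h2 \<in> mcar F"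
  using gg_G1 C_car[OF G1C] xE by simp

lemma g1'_dq: assumes h2: "h2 \<in> mcar E" shows "is_dq c E F U (\<lambda>y. dd c E F U f y h2) (g1' h2)"
proof -
  let ?V = "V1 c E U"
  let ?XX = "P E (P E K)"
  have Vo: "openin (mtop ?XX) ?V" using C_open[OF G1C] unfolding X3_def .
  have VX: "?V \<subseteq> mcar ?XX" using C_dom[OF G1C] unfolding X3_def .
  have XM: "?XX \<in> Mods c" using C_M1[OF G1C] unfolding X3_def .
  have PEK: "P E K \<in> Mods c" using EM by simp
  have pf: "C ?XX E ?V vfst" using C_restrict[OF C_fst[OF EM PEK] Vo VX] .
  have ps: "C ?XX (P E K) ?V vsnd" using C_restrict[OF C_snd[OF EM PEK] Vo VX] .
  have pfs: "C ?XX E ?V (\<lambda>q. vfst (vsnd q))" using C_comp'[OF ps C_fst[OF EM KM]] C_car[OF ps] by simp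
  have pss: "C ?XX K ?V (\<lambda>q. vsnd (vsnd q))" using C_comp'[OF ps C_snd[OF EM KM]] C_car[OF ps] by simp
  have k1: "C ?XX (P E K) ?V (\<lambda>_. Pr h2 (Sc 0))" using C_const[OF XM PEK Vo] h2 by simp
  have k2': "C ?XX (P E K) ?V (\<lambda>_. Pr (mzero E) (Sc 0))" using C_const[OF XM PEK Vo] by simp
  have psi: "C ?XX (P ?XX (P ?XX K)) ?V (\<lambda>q. Pr (Pr (vfst q) (Pr h2 (Sc 0))) (Pr (Pr (vfst (vsnd q)) (Pr (mzero E) (Sc 0))) (vsnd (vsnd q))))"
    by (rule C_pair[OF C_pair[OF pf k1] C_pair[OF C_pair[OF pfs k2'] pss]])
  have memb: "Pr (Pr (vfst q) (Pr h2 (Sc 0))) (Pr (Pr (vfst (vsnd q)) (Pr (mzero E) (Sc 0))) (vsnd (vsnd q)))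
      \<in> V1 c ?XX ?V" if q: "q \<in> ?V" for q
  proof -
    from q obtain y v t where yvt: "q = Pr y (Pr v t)" "y \<in> U" "v \<in> mcar E" "t \<in> range Sc"
       "madd E y (msmul E (unSc t) v) \<in> U" unfolding V1_def Kmod_simps by blast
    then show ?thesis using h2 xE[OF yvt(2)] xE[OF yvt(5)] by auto
  qed
  have C1: "C ?XX F ?V (g1' h2)"
    unfolding g1'_def using C_comp'[OF psi G2C[unfolded X3_def] memb] by simp
  have eq: "msub F (dd c E F U f (madd E y (msmul E (unSc t) v)) h2) (dd c E F U f y h2) =
      msmul F (unSc t) (g1' h2 (Pr y (Pr v t)))" if V: "Pr y (Pr v t) \<in> ?V" for y v t
  proof -
    have y: "y \<in> U" and v: "v \<in> mcar E" and t: "t \<in> range Sc" and yt: "madd E y (msmul E (unSc t) v) \<in> U"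
      using V by auto
    define p where "p = Pr y (Pr h2 (Sc 0))"
    define w where "w = Pr v (Pr (mzero E) (Sc 0))"
    have Q: "Pr p (Pr w t) \<in> V1 c (X3 c E) ?V" using memb[OF V] xE[OF y] xE[OF yt] h2 unfolding p_def w_def X3_def by simp
    have mv: "madd (X3 c E) p (msmul (X3 c E) (unSc t) w) = Pr (madd E y (msmul E (unSc t) v)) (Pr h2 (Sc 0))"
      unfolding p_def w_def using X3_move[OF h2] by simp
    show ?thesis using dq_eq[OF dq1 Q] mv gg_G1[OF y h2] gg_G1[OF yt h2]
      unfolding g1'_def p_def w_def by simp
  qed
  show ?thesis unfolding is_dq_def using C1 eq unfolding X3_def by blast
qed

lemma dd2_G2: assumes x: "x \<in> U" and h1: "h1 \<in> mcar E" and h2: "h2 \<in> mcar E"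
  shows "dd2 c E F U f x h1 h2 = GG 2 (Pr (Pr x (Pr h2 (Sc 0))) (Pr (Pr h1 (Pr (mzero E) (Sc 0))) (Sc 0)))"
  unfolding dd2_def dd_def[of c E F U "\<lambda>y. dd c E F U f y h2"]
  using dq_unique0[OF dq_is[OF g1'_dq[OF h2]] g1'_dq[OF h2] x h1] unfolding g1'_def by simp

lemma dd2_lin1: assumes x: "x \<in> U" and h2: "h2 \<in> mcar E"
  shows "is_linear_map E F (\<lambda>h1. dd2 c E F U f x h1 h2)"
  unfolding dd2_def dd_def[of c E F U "\<lambda>y. dd c E F U f y h2"]
  using dq_linear[OF dq_is[OF g1'_dq[OF h2]] gg_car[OF h2] x] .

lemma B_dd2: assumes x: "x \<in> U" and h1: "h1 \<in> mcar E" and h2: "h2 \<in> mcar E"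
  shows "msub F (msub F (a 2 (Pr x (madd E h1 h2))) (a 2 (Pr x h1))) (a 2 (Pr x h2)) = dd2 c E F U f x h1 h2"
  using B_G2[OF assms] dd2_G2[OF assms] by simp

lemma conclusion: "\<forall>x\<in>U.
     (\<forall>h\<in>mcar E. a 0 (Pr x h) = f x) \<and>
     (\<forall>h\<in>mcar E. a 1 (Pr x h) = dd c E F U f x h) \<and>
     is_linear_map E F (\<lambda>h. a 1 (Pr x h)) \<and>
     is_quadratic_form E F (\<lambda>h. a 2 (Pr x h)) \<and>
     (\<forall>h1\<in>mcar E. \<forall>h2\<in>mcar E.
        msub F (msub F (a 2 (Pr x (madd E h1 h2))) (a 2 (Pr x h1))) (a 2 (Pr x h2))
          = dd2 c E F U f x h1 h2) \<and>
     (\<forall>h\<in>mcar E. msmul F 2 (a 2 (Pr x h)) = dd2 c E F U f x h h)" (is "\<forall>x\<in>U. ?P x")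
proof (rule ballI)
  fix x assume x: "x \<in> U"
  have c1: "\<forall>h\<in>mcar E. a 0 (Pr x h) = f x" using a0 x by blast
  have c2: "\<forall>h\<in>mcar E. a 1 (Pr x h) = dd c E F U f x h" using a1_G1 dd_G1 x by simp
  have c3: "is_linear_map E F (\<lambda>h. a 1 (Pr x h))" using a1_lin[OF x] .
  have B: "\<forall>h1\<in>mcar E. \<forall>h2\<in>mcar E.
        msub F (msub F (a 2 (Pr x (madd E h1 h2))) (a 2 (Pr x h1))) (a 2 (Pr x h2))
          = dd2 c E F U f x h1 h2" using B_dd2 x by blast
  have c4: "is_quadratic_form E F (\<lambda>h. a 2 (Pr x h))"
    unfolding is_quadratic_form_def is_bilinear_map_def
  proof (intro conjI ballI allI)
    fix t h assume "h \<in> mcar E"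
    then show "a 2 (Pr x (msmul E t h)) = msmul F (t ^ 2) (a 2 (Pr x h))" using a2_hom x by blast
  next
    fix h2 assume h2: "h2 \<in> mcar E"
    show "is_linear_map E F (\<lambda>h1. msub F (msub F (a 2 (Pr x (madd E h1 h2))) (a 2 (Pr x h1))) (a 2 (Pr x h2)))"
      by (rule lin_cong[OF dd2_lin1[OF x h2]]) (use B h2 in auto)
  next
    fix h1 assume h1: "h1 \<in> mcar E"
    have sym: "msub F (msub F (a 2 (Pr x (madd E h1 h2))) (a 2 (Pr x h1))) (a 2 (Pr x h2)) =
        dd2 c E F U f x h2 h1" if h2: "h2 \<in> mcar E" for h2
    proof -
      have "msub F (msub F (a 2 (Pr x (madd E h1 h2))) (a 2 (Pr x h1))) (a 2 (Pr x h2)) =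
            msub F (msub F (a 2 (Pr x (madd E h2 h1))) (a 2 (Pr x h2))) (a 2 (Pr x h1))"
        using F.sub_swap E.add_comm h1 h2 x k2 by simp
      then show ?thesis using B h1 h2 by simp
    qed
    show "is_linear_map E F (\<lambda>h2. msub F (msub F (a 2 (Pr x (madd E h1 h2))) (a 2 (Pr x h1))) (a 2 (Pr x h2)))"
      by (rule lin_cong[OF dd2_lin1[OF x h1]]) (use sym in auto)
  qed
  have c6: "\<forall>h\<in>mcar E. msmul F 2 (a 2 (Pr x h)) = dd2 c E F U f x h h"
  proof
    fix h assume h: "h \<in> mcar E"
    define y where "y = a 2 (Pr x h)"
    have y: "y \<in> mcar F" using x h k2 y_def by simp
    have hh: "madd E h h = msmul E 2 h" using E.add_smul[OF h, of 1 1] h by simp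
    have four: "msmul F (2 ^ 2) y = madd F (madd F (msmul F 2 y) y) y"
    proof -
      have e: "(2::'k) ^ 2 = 2 + 1 + 1" by simp
      have "msmul F (2 + 1 + 1) y = madd F (madd F (msmul F 2 y) (msmul F 1 y)) (msmul F 1 y)"
        using F.add_smul[OF y, of "2 + 1" 1] F.add_smul[OF y, of 2 1] by simp
      then show ?thesis unfolding e using y by simp
    qed
    have "dd2 c E F U f x h h = msub F (msub F (a 2 (Pr x (msmul E 2 h))) y) y"
      using B x h hh y_def by metis
    also have "\<dots> = msub F (msub F (madd F (madd F (msmul F 2 y) y) y) y) y"
      using a2_hom[OF x h, of 2] four y_def by simp
    also have "\<dots> = msmul F 2 y" using y by (simp add: F.sub_add)
    finally show "msmul F 2 (a 2 (Pr x h)) = dd2 c E F U f x h h" using y_def by simp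
  qed
  show "?P x" using c1 c2 c3 c4 B c6 by blast
qed

end

theorem proposition5p3:
  fixes c :: "('k::comm_ring_1, 'a) c0concept"
    and E F :: "('k, 'a) tmod"
    and U :: "('k, 'a) val set"
    and k :: nat
    and f :: "('k, 'a) val \<Rightarrow> ('k, 'a) val"
    and a :: "nat \<Rightarrow> ('k, 'a) val \<Rightarrow> ('k, 'a) val"
    and R :: "('k, 'a) val \<Rightarrow> ('k, 'a) val"
  assumes concept: "is_C0_concept c"
    and EM: "E \<in> Mods c" and FM: "F \<in> Mods c"
    and Uopen: "openin (mtop E) U"
    and k2: "k \<ge> 2"
    and fCk: "Ck c k E F U f"
    and aC: "\<forall>j\<le>k. Ck c (k - j) (prodm c E E) F (pset U (mcar E)) (a j)"
    and RC: "C0 c (X3 c E) F (V1 c E U) R"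
    and R0: "\<forall>x\<in>U. \<forall>h\<in>mcar E. R (Pr x (Pr h (Sc 0))) = mzero F"
    and expansion: "\<forall>x h t. Pr x (Pr h t) \<in> V1 c E U \<longrightarrow>
        f (madd E x (msmul E (unSc t) h)) =
        madd F (msumn F (Suc k) (\<lambda>j. msmul F (unSc t ^ j) (a j (Pr x h))))
               (msmul F (unSc t ^ k) (R (Pr x (Pr h t))))"
  shows "\<forall>x\<in>U.
     (\<forall>h\<in>mcar E. a 0 (Pr x h) = f x) \<and>
     (\<forall>h\<in>mcar E. a 1 (Pr x h) = dd c E F U f x h) \<and>
     is_linear_map E F (\<lambda>h. a 1 (Pr x h)) \<and>
     is_quadratic_form E F (\<lambda>h. a 2 (Pr x h)) \<and>
     (\<forall>h1\<in>mcar E. \<forall>h2\<in>mcar E.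
        msub F (msub F (a 2 (Pr x (madd E h1 h2))) (a 2 (Pr x h1))) (a 2 (Pr x h2))
          = dd2 c E F U f x h1 h2) \<and>
     (\<forall>h\<in>mcar E. msmul F 2 (a 2 (Pr x h)) = dd2 c E F U f x h h)"
proof -
  interpret mainl c E F U k f a R
    by (rule mainl.intro[OF cc.intro[OF concept] mainl_axioms.intro[OF EM FM Uopen k2 fCk aC RC R0 expansion]])
  show ?thesis by (rule conclusion)
qed

end
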